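(* Let $l>0$, $\gamma\in(0,1)$ and let $\epsilon:[0,\infty)\to(0,\infty)$ be a monotonically decreasing measurable function such that $\int_1^\infty\frac{\epsilon(k)}{k}\,\mathrm{d}k<\infty$ and $\liminf_{k\to\infty}k^\gamma\epsilon(k)>0$. Then there is a non-negative even real-valued $g\in C_0^\infty(\mathbb{R})$ with support in $[-l,l]$ such that $\int g=1$ and $$\hat g(k)\ge e^{-|k|\epsilon(|k|)}\qquad\text{for all }k\in\mathbb{R}.$$
   Context: The Fourier transform is $\hat f(k)=\int_{\mathbb{R}} e^{-ikx}f(x)\,\mathrm{d}x$. *)

theory Defs
  imports "HOL-Analysis.Analysis"
begin

definition fourier :: "(real \<Rightarrow> real) \<Rightarrow> real \<Rightarrow> complex" where
  "fourier f k = (LINT x|lborel. cis (- k * x) * complex_of_real (f x))"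

definition smooth_fun :: "(real \<Rightarrow> real) \<Rightarrow> bool" where
  "smooth_fun f \<longleftrightarrow> (\<forall>n x. ((deriv ^^ n) f) differentiable (at x))"

end

theory Submission
  imports Defs "HOL-Probability.Probability"
begin

definition psi :: "real \<Rightarrow> real" where
  "psi u = (if u = 0 then 1 else 6 * (u - sin u) / u^3)"

lemma psi_even: "psi (-u) = psi u"
proof (cases "u = 0")
  case False
  have "6 * (-u - sin (-u)) = -(6 * (u - sin u))" by simp
  moreover have "(-u)^3 = -(u^3)" by (simp add: power_minus_odd)
  ultimately have "6 * (-u - sin (-u)) / (-u)^3 = 6 * (u - sin u) / u^3"
    by (metis minus_divide_divide)
  then show ?thesis using False by (simp add: psi_def)
qed (simp add: psi_def)

lemma sin_taylor5: "\<bar>sin (x::real) - (x - x^3/6)\<bar> \<le> \<bar>x\<bar>^5 / 120"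
proof -
  have a: "(\<Sum>m<5. sin_coeff m * (x::real) ^ m) = sin_coeff 0 * x^0 + sin_coeff 1 * x^1 + sin_coeff 2 * x^2 + sin_coeff 3 * x^3 + sin_coeff 4 * x^4"
    by (simp add: numeral_eq_Suc)
  have b: "sin_coeff 0 = 0" "sin_coeff 1 = 1" "sin_coeff 2 = 0" "sin_coeff 4 = 0" "sin_coeff 3 = -1/6"
    by (simp_all add: sin_coeff_def fact_numeral)
  have c: "(\<Sum>m<5. sin_coeff m * x ^ m) = x - x^3/6" unfolding a b by simp
  have d: "inverse (fact 5) * \<bar>x\<bar>^5 = \<bar>x\<bar>^5 / (120::real)" by (simp add: fact_numeral)
  show ?thesis using Maclaurin_sin_bound[of x 5] unfolding c d .
qed

lemma sin_lt_x: "x > 0 \<Longrightarrow> sin x < (x::real)"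
proof -
  assume x: "x > 0"
  show ?thesis
  proof (cases "x \<le> 1")
    case True
    have "\<bar>sin x - (x - x^3/6)\<bar> \<le> x^5/120" using sin_taylor5[of x] x by simp
    moreover have "x^5 \<le> x^3" using True x by (simp add: power_decreasing)
    moreover have "x^3 > 0" using x by simp
    ultimately show ?thesis by linarith
  next
    case False
    then show ?thesis using sin_le_one[of x] by linarith
  qed
qed

lemma psi_pos_aux: "v > 0 \<Longrightarrow> psi v > 0"
  using sin_lt_x[of v] by (simp add: psi_def)

lemma psi_pos: "psi u > 0"
proof -
  consider "u = 0" | "u > 0" | "-u > 0" by linarith
  then show ?thesis
  proof cases
    case 1 then show ?thesis by (simp add: psi_def)
  next
    case 2 then show ?thesis by (rule psi_pos_aux)
  next
    case 3 then show ?thesis using psi_pos_aux[OF 3] by (simp add: psi_even)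
  qed
qed

lemma psi_lower_small: "psi u \<ge> 1 - u^2/20"
proof (cases "u = 0")
  case True then show ?thesis by (simp add: psi_def)
next
  case False
  have a: "\<bar>sin u - (u - u^3/6)\<bar> \<le> \<bar>u\<bar>^5 / 120" by (rule sin_taylor5)
  have e: "psi u = 1 - 6 * (sin u - (u - u^3/6)) / u^3"
    using False by (simp add: psi_def field_simps)
  have "6 * (sin u - (u - u^3/6)) / u^3 \<le> u^2/20"
  proof -
    have "\<bar>6 * (sin u - (u - u^3/6)) / u^3\<bar> = 6 * \<bar>sin u - (u - u^3/6)\<bar> / \<bar>u\<bar>^3"
      by (simp only: abs_divide abs_mult power_abs)
    also have "\<dots> \<le> 6 * (\<bar>u\<bar>^5/120) / \<bar>u\<bar>^3"
      using a False by (intro divide_right_mono mult_left_mono) auto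
    also have "\<dots> = u^2/20" using False by (simp add: field_simps power2_eq_square eval_nat_numeral)
    finally show ?thesis by linarith
  qed
  with e show ?thesis by linarith
qed

lemma psi_lower_large: assumes "\<bar>u\<bar> \<ge> 2" shows "psi u \<ge> 3/u^2"
proof -
  have pos: "\<And>v::real. v \<ge> 2 \<Longrightarrow> psi v \<ge> 3/v^2"
  proof -
    fix v :: real assume v: "v \<ge> 2"
    have "v - sin v \<ge> v/2" using sin_le_one[of v] v by linarith
    then have "6 * (v - sin v) / v^3 \<ge> 6 * (v/2) / v^3" using v
      by (intro divide_right_mono) auto
    moreover have "6 * (v/2) / v^3 = 3 / v^2" using v by (simp add: field_simps power2_eq_square eval_nat_numeral)
    ultimately show "psi v \<ge> 3/v^2" using v by (simp add: psi_def)
  qed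
  show ?thesis
  proof (cases "u \<ge> 0")
    case True then show ?thesis using pos assms by simp
  next
    case False then show ?thesis using pos[of "-u"] assms by (simp add: psi_even)
  qed
qed

lemma psi_upper_large: assumes "\<bar>u\<bar> \<ge> 1" shows "psi u \<le> 12/u^2"
proof -
  have pos: "\<And>v::real. v \<ge> 1 \<Longrightarrow> psi v \<le> 12/v^2"
  proof -
    fix v :: real assume v: "v \<ge> 1"
    have "v - sin v \<le> 2* v" using sin_ge_minus_one[of v] v by linarith
    then have "6 * (v - sin v) / v^3 \<le> 6 * (2* v) / v^3" using v
      by (intro divide_right_mono) auto
    moreover have "6 * (2* v) / v^3 = 12 / v^2" using v by (simp add: field_simps power2_eq_square eval_nat_numeral)
    ultimately show "psi v \<le> 12/v^2" using v by (simp add: psi_def)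
  qed
  show ?thesis
  proof (cases "u \<ge> 0")
    case True then show ?thesis using pos assms by simp
  next
    case False then show ?thesis using pos[of "-u"] assms by (simp add: psi_even)
  qed
qed

lemma ln_le_powr: fixes x d :: real assumes "x > 0" "d > 0" shows "ln x \<le> x powr d / d"
proof -
  have "ln (x powr d) \<le> x powr d - 1" using ln_le_minus_one[of "x powr d"] assms by simp
  then have "d * ln x \<le> x powr d" using assms by (simp add: ln_powr)
  then show ?thesis using assms by (simp add: field_simps)
qed

lemma psi_lower_exp:
  assumes d: "0 < d" "d \<le> 1"
  shows "psi u \<ge> exp (- ((2/d + 1) * \<bar>u\<bar> powr d))"
proof (cases "\<bar>u\<bar> \<le> 2")
  case True
  define x where "x = u^2/20"
  have "u^2 \<le> 2^2" using True power_mono[of "\<bar>u\<bar>" 2 2] by simp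
  then have x0: "0 \<le> x" "x \<le> 1/2" unfolding x_def by auto
  have "exp (-(2*x)) \<le> 1 - x"
  proof -
    have "exp (2*x) \<ge> 1 + 2*x" by (rule exp_ge_add_one_self)
    then have "exp (-(2*x)) \<le> 1/(1+2*x)" using x0 by (simp add: exp_minus field_simps)
    also have "1/(1+2*x) \<le> 1 - x"
    proof -
      have "x * (2*x) \<le> x * 1" using x0 by (intro mult_left_mono) auto
      then have "1 \<le> (1-x)*(1+2*x)" by (simp add: algebra_simps)
      then show ?thesis using x0 by (simp add: pos_divide_le_eq)
    qed
    finally show ?thesis .
  qed
  moreover have "2*x \<le> (2/d + 1) * \<bar>u\<bar> powr d"
  proof (cases "u = 0")
    case True then show ?thesis by (simp add: x_def)
  next
    case False
    have e1: "u^2 = \<bar>u\<bar> powr d * \<bar>u\<bar> powr (2 - d)" using False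
      by (simp add: powr_add[symmetric] powr_numeral)
    have e2: "\<bar>u\<bar> powr (2 - d) \<le> 2 powr (2 - d)" using True d False by (intro powr_mono2) auto
    have e3: "2 powr (2-d) \<le> (4::real)" using d powr_mono[of "2-d" 2 "2::real"] by (simp add: powr_numeral)
    have "u^2 \<le> \<bar>u\<bar> powr d * 4" unfolding e1 using e2 e3
      by (intro mult_left_mono) auto
    then have "u^2 \<le> 4 * \<bar>u\<bar> powr d" by simp
    moreover have "2/d + 1 \<ge> 1" using d by simp
    moreover have "\<bar>u\<bar> powr d \<ge> 0" by simp
    ultimately have "1 * \<bar>u\<bar> powr d \<le> (2/d + 1) * \<bar>u\<bar> powr d"
      by (intro mult_right_mono) auto
    moreover have "0 \<le> (2/d + 1) * \<bar>u\<bar> powr d" using d by simp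
    ultimately show ?thesis using \<open>u^2 \<le> 4 * \<bar>u\<bar> powr d\<close> unfolding x_def by linarith
  qed
  then have "exp (- ((2/d + 1) * \<bar>u\<bar> powr d)) \<le> exp (-(2*x))" by simp
  ultimately show ?thesis using psi_lower_small[of u] unfolding x_def by linarith
next
  case False
  then have u2: "\<bar>u\<bar> \<ge> 2" by simp
  have u2p: "u^2 > 0" using u2 by auto
  have e3: "3/u^2 = exp (- ln (u^2/3))"
    using u2p by (simp add: exp_minus)
  have l1: "ln (u^2/3) \<le> ln (u^2)" using u2p by simp
  have l2: "ln (u^2) = 2 * ln \<bar>u\<bar>"
  proof -
    have "u^2 = \<bar>u\<bar>^2" by simp
    then show ?thesis using u2 by (simp only: ln_realpow)
  qed
  have l3: "ln \<bar>u\<bar> \<le> \<bar>u\<bar> powr d / d" using u2 d by (intro ln_le_powr) auto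
  have l4: "2 * ln \<bar>u\<bar> \<le> (2/d + 1) * \<bar>u\<bar> powr d"
  proof -
    have "2 * (\<bar>u\<bar> powr d / d) = (2/d) * \<bar>u\<bar> powr d" by simp
    moreover have "(2/d + 1) * \<bar>u\<bar> powr d = (2/d) * \<bar>u\<bar> powr d + \<bar>u\<bar> powr d" by (simp add: algebra_simps)
    moreover have "0 \<le> \<bar>u\<bar> powr d" by simp
    ultimately show ?thesis using l3 by linarith
  qed
  have "ln (u^2/3) \<le> (2/d + 1) * \<bar>u\<bar> powr d" using l1 l2 l4 by linarith
  then have "3/u^2 \<ge> exp (- ((2/d + 1) * \<bar>u\<bar> powr d))" unfolding e3 by simp
  with psi_lower_large[OF u2] show ?thesis by linarith
qed


definition FF :: "real \<Rightarrow> real \<Rightarrow> real \<Rightarrow> real" where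
  "FF a t x = (1-x/a)^2 * sin(t*x)/t + (-2*(1-x/a)/a) * cos(t*x)/t^2 - (2/a^2) * sin(t*x)/t^3"

lemma FF_deriv: assumes "t \<noteq> 0" "a > 0"
  shows "(FF a t has_real_derivative ((1-x/a)^2 * cos(t*x))) (at x)"
  unfolding FF_def using assms
  by (auto intro!: derivative_eq_intros simp: field_simps power2_eq_square eval_nat_numeral)

definition PP :: "real \<Rightarrow> real \<Rightarrow> real" where
  "PP a x = -(a/3) * (1-x/a)^3"

lemma PP_deriv: assumes "a > 0"
  shows "(PP a has_real_derivative ((1-x/a)^2)) (at x)"
  unfolding PP_def using assms
  by (auto intro!: derivative_eq_intros simp: field_simps power2_eq_square eval_nat_numeral)

definition qd :: "real \<Rightarrow> real \<Rightarrow> real" where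
  "qd a x = indicator {-a..a} x * (3/(2*a) * (1 - \<bar>x\<bar>/a)^2)"

lemma qd_nonneg: "a > 0 \<Longrightarrow> qd a x \<ge> 0"
  unfolding qd_def by (simp add: indicator_def)

lemma qd_meas[measurable]: "qd a \<in> borel_measurable borel"
  unfolding qd_def by measurable

definition hq :: "real \<Rightarrow> real \<Rightarrow> real \<Rightarrow> real" where
  "hq a t x = 3/(2*a) * (1 - \<bar>x\<bar>/a)^2 * cos (t*x)"

lemma hq_cont: "a > 0 \<Longrightarrow> continuous_on S (hq a t)"
  unfolding hq_def by (intro continuous_intros) auto

lemma half_right: assumes "a > 0"
  shows "(LBINT x=ereal 0..ereal a. hq a t x) = psi (a*t) / 2"
proof (cases "t = 0")
  case True
  have "(LBINT x=ereal 0..ereal a. hq a t x) = 3/(2*a) * PP a a - 3/(2*a) * PP a 0"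
  proof (rule interval_integral_FTC_finite)
    show "continuous_on {min 0 a..max 0 a} (hq a t)" by (rule hq_cont[OF assms])
    fix x assume x: "min 0 a \<le> x" "x \<le> max 0 a"
    have "((\<lambda>x. 3/(2*a) * PP a x) has_real_derivative 3/(2*a) * (1-x/a)^2) (at x)"
      using PP_deriv[OF assms] by (intro derivative_eq_intros) auto
    moreover have "hq a t x = 3/(2*a) * (1-x/a)^2" using x assms True by (simp add: hq_def)
    ultimately show "((\<lambda>x. 3/(2*a) * PP a x) has_vector_derivative hq a t x) (at x within {min 0 a..max 0 a})"
      by (simp add: has_real_derivative_iff_has_vector_derivative[symmetric] has_field_derivative_at_within)
  qed
  also have "\<dots> = 1/2" using assms by (simp add: PP_def)
  finally show ?thesis using True by (simp add: psi_def)
next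
  case False
  have "(LBINT x=ereal 0..ereal a. hq a t x) = 3/(2*a) * FF a t a - 3/(2*a) * FF a t 0"
  proof (rule interval_integral_FTC_finite)
    show "continuous_on {min 0 a..max 0 a} (hq a t)" by (rule hq_cont[OF assms])
    fix x assume x: "min 0 a \<le> x" "x \<le> max 0 a"
    have "((\<lambda>x. 3/(2*a) * FF a t x) has_real_derivative 3/(2*a) * ((1-x/a)^2 * cos (t*x))) (at x)"
      using FF_deriv[OF False assms] by (intro derivative_eq_intros) auto
    moreover have "hq a t x = 3/(2*a) * ((1-x/a)^2 * cos (t*x))" using x assms by (simp add: hq_def)
    ultimately show "((\<lambda>x. 3/(2*a) * FF a t x) has_vector_derivative hq a t x) (at x within {min 0 a..max 0 a})"
      by (simp add: has_real_derivative_iff_has_vector_derivative[symmetric] has_field_derivative_at_within)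
  qed
  also have "\<dots> = psi (a*t) / 2" using assms False
    by (simp add: FF_def psi_def field_simps power2_eq_square eval_nat_numeral)
  finally show ?thesis .
qed

lemma half_left: assumes "a > 0"
  shows "(LBINT x=ereal (-a)..ereal 0. hq a t x) = psi (a*t) / 2"
proof (cases "t = 0")
  case True
  have "(LBINT x=ereal (-a)..ereal 0. hq a t x) = (- 3/(2*a) * PP a (-0)) - (- 3/(2*a) * PP a (-(-a)))"
  proof (rule interval_integral_FTC_finite)
    show "continuous_on {min (-a) 0..max (-a) 0} (hq a t)" by (rule hq_cont[OF assms])
    fix x assume x: "min (-a) 0 \<le> x" "x \<le> max (-a) 0"
    have "((\<lambda>x. - 3/(2*a) * PP a (-x)) has_real_derivative - 3/(2*a) * ((1-(-x)/a)^2 * (-1))) (at x)"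
    proof -
      have d1: "((\<lambda>x. -x) has_real_derivative -1) (at x)" by (auto intro!: derivative_eq_intros)
      have d2: "((\<lambda>x. PP a (-x)) has_real_derivative (1-(-x)/a)^2 * (-1)) (at x)"
        by (rule DERIV_chain2[OF PP_deriv[OF assms] d1])
      show ?thesis using d2 by (rule DERIV_cmult)
    qed
    moreover have "hq a t x = - 3/(2*a) * ((1-(-x)/a)^2 * (-1))" using x assms True by (simp add: hq_def)
    ultimately show "((\<lambda>x. - 3/(2*a) * PP a (-x)) has_vector_derivative hq a t x) (at x within {min (-a) 0..max (-a) 0})"
      by (simp add: has_real_derivative_iff_has_vector_derivative[symmetric] has_field_derivative_at_within)
  qed
  also have "\<dots> = 1/2" using assms by (simp add: PP_def)
  finally show ?thesis using True by (simp add: psi_def)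
next
  case False
  have "(LBINT x=ereal (-a)..ereal 0. hq a t x) = (- 3/(2*a) * FF a t (-0)) - (- 3/(2*a) * FF a t (-(-a)))"
  proof (rule interval_integral_FTC_finite)
    show "continuous_on {min (-a) 0..max (-a) 0} (hq a t)" by (rule hq_cont[OF assms])
    fix x assume x: "min (-a) 0 \<le> x" "x \<le> max (-a) 0"
    have "((\<lambda>x. - 3/(2*a) * FF a t (-x)) has_real_derivative - 3/(2*a) * (((1-(-x)/a)^2 * cos (t*(-x))) * (-1))) (at x)"
    proof -
      have d1: "((\<lambda>x. -x) has_real_derivative -1) (at x)" by (auto intro!: derivative_eq_intros)
      have d2: "((\<lambda>x. FF a t (-x)) has_real_derivative ((1-(-x)/a)^2 * cos (t*(-x))) * (-1)) (at x)"
        by (rule DERIV_chain2[OF FF_deriv[OF False assms] d1])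
      show ?thesis using d2 by (rule DERIV_cmult)
    qed
    moreover have "hq a t x = - 3/(2*a) * (((1-(-x)/a)^2 * cos (t*(-x))) * (-1))" using x assms by (simp add: hq_def)
    ultimately show "((\<lambda>x. - 3/(2*a) * FF a t (-x)) has_vector_derivative hq a t x) (at x within {min (-a) 0..max (-a) 0})"
      by (simp add: has_real_derivative_iff_has_vector_derivative[symmetric] has_field_derivative_at_within)
  qed
  also have "\<dots> = psi (a*t) / 2" using assms False
    by (simp add: FF_def psi_def field_simps power2_eq_square eval_nat_numeral)
  finally show ?thesis .
qed

lemma qd_times_eq: "qd a x * f x = indicator {-a..a} x *\<^sub>R (3/(2*a) * (1 - \<bar>x\<bar>/a)^2 * f x)"
  unfolding qd_def by (simp add: indicator_def)

lemma qd_integrable: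
  assumes "continuous_on UNIV f" "a > 0"
  shows "integrable lborel (\<lambda>x. qd a x * f x)"
proof -
  have "set_integrable lborel {-a..a} (\<lambda>x. 3/(2*a) * (1 - \<bar>x\<bar>/a)^2 * f x)"
    using assms by (intro borel_integrable_atLeastAtMost' continuous_intros continuous_on_subset[OF assms(1)]) auto
  moreover have "(\<lambda>x. qd a x * f x) = (\<lambda>x. indicator {-a..a} x *\<^sub>R (3/(2*a) * (1 - \<bar>x\<bar>/a)^2 * f x))"
    by (auto simp: qd_def indicator_def)
  ultimately show ?thesis unfolding set_integrable_def by simp
qed

lemma qd_cos_int: assumes "a > 0"
  shows "(LINT x|lborel. qd a x * cos (t*x)) = psi (a*t)"
proof -
  have "(LINT x|lborel. qd a x * cos (t*x)) = (LBINT x:{-a..a}. hq a t x)"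
  proof -
    have "(\<lambda>x. qd a x * cos (t*x)) = (\<lambda>x. indicator {-a..a} x *\<^sub>R hq a t x)"
      by (auto simp: qd_def hq_def indicator_def)
    then show ?thesis unfolding set_lebesgue_integral_def by simp
  qed
  also have "\<dots> = (LBINT x=ereal (-a)..ereal a. hq a t x)"
    using assms by (simp add: interval_integral_Icc)
  also have "\<dots> = (LBINT x=ereal (-a)..ereal 0. hq a t x) + (LBINT x=ereal 0..ereal a. hq a t x)"
  proof -
    have "interval_lebesgue_integrable lborel (ereal (-a)) (ereal a) (hq a t)"
      using assms by (intro interval_integrable_continuous_on hq_cont) auto
    then show ?thesis using assms
      by (subst interval_integral_sum[symmetric]) (auto simp: min_def max_def)
  qed
  also have "\<dots> = psi (a*t)" using half_left[OF assms, of t] half_right[OF assms, of t] by linarith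
  finally show ?thesis .
qed

lemma lborel_integral_reflect:
  fixes f :: "real \<Rightarrow> 'b::{banach, second_countable_topology}"
  assumes [measurable]: "f \<in> borel_measurable borel"
  shows "(LINT x|lborel. f (-x)) = (LINT x|lborel. f x)"
proof -
  have "(LINT x|lborel. f x) = (LINT x|distr lborel borel uminus. f x)"
    by (simp add: lborel_distr_uminus)
  also have "\<dots> = (LINT x|lborel. f (-x))"
    by (subst integral_distr) auto
  finally show ?thesis ..
qed

lemma odd_integral_zero:
  fixes f :: "real \<Rightarrow> real"
  assumes [measurable]: "f \<in> borel_measurable borel" and odd: "\<And>x. f (-x) = - f x"
  shows "(LINT x|lborel. f x) = 0"
proof -
  have "(LINT x|lborel. f x) = (LINT x|lborel. f (-x))" by (rule lborel_integral_reflect[symmetric]) simp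
  also have "\<dots> = - (LINT x|lborel. f x)" by (simp add: odd)
  finally show ?thesis by simp
qed

lemma qd_even: "qd a (-x) = qd a x"
proof -
  have "(-x \<in> {-a..a}) = (x \<in> {-a..a})" by auto
  then show ?thesis unfolding qd_def indicator_def by simp
qed

lemma qd_sin_int: "(LINT x|lborel. qd a x * sin (t*x)) = 0"
  by (rule odd_integral_zero) (auto simp: qd_even)

definition nu :: "real \<Rightarrow> real measure" where
  "nu a = density lborel (\<lambda>x. ennreal (qd a x))"

lemma qd_int_one: "a > 0 \<Longrightarrow> (LINT x|lborel. qd a x) = 1"
  using qd_cos_int[of a 0] by (simp add: psi_def)

lemma nu_real_distribution: assumes "a > 0" shows "real_distribution (nu a)"
proof -
  have int: "integrable lborel (qd a)"
    using qd_integrable[of "\<lambda>x. 1" a] assms by simp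
  have "emeasure (nu a) UNIV = (\<integral>\<^sup>+x. ennreal (qd a x) \<partial>lborel)"
    unfolding nu_def by (simp add: emeasure_density)
  also have "\<dots> = ennreal (LINT x|lborel. qd a x)"
    using int qd_nonneg[OF assms] by (intro nn_integral_eq_integral) auto
  also have "\<dots> = 1" using qd_int_one[OF assms] by simp
  finally have "emeasure (nu a) (space (nu a)) = 1" by (simp add: nu_def)
  then have "prob_space (nu a)" by (rule prob_spaceI)
  then show ?thesis
    by (simp add: real_distribution_def real_distribution_axioms_def nu_def)
qed

lemma iexp_eq: "iexp y = complex_of_real (cos y) + \<i> * complex_of_real (sin y)"
  by (simp add: cis_conv_exp[symmetric] cis.code complex_eq_iff)

lemma char_nu: assumes "a > 0" shows "char (nu a) t = complex_of_real (psi (a*t))"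
proof -
  have "char (nu a) t = (CLINT x|lborel. qd a x *\<^sub>R iexp (t*x))"
    unfolding char_def nu_def using qd_nonneg[OF assms]
    by (subst integral_density) auto
  also have "\<dots> = (CLINT x|lborel. complex_of_real (qd a x * cos (t*x)) + \<i> * complex_of_real (qd a x * sin (t*x)))"
    by (intro Bochner_Integration.integral_cong refl, simp only: iexp_eq) (simp add: scaleR_conv_of_real algebra_simps)
  also have "\<dots> = complex_of_real (LINT x|lborel. qd a x * cos (t*x)) + \<i> * complex_of_real (LINT x|lborel. qd a x * sin (t*x))"
  proof -
    have i1: "integrable lborel (\<lambda>x. complex_of_real (qd a x * cos (t*x)))"
      using assms by (intro integrable_of_real qd_integrable continuous_intros) auto
    have i2: "integrable lborel (\<lambda>x. \<i> * complex_of_real (qd a x * sin (t*x)))"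
      using assms by (intro integrable_mult_right integrable_of_real qd_integrable continuous_intros) auto
    show ?thesis by (simp only: Bochner_Integration.integral_add[OF i1 i2] integral_complex_of_real integral_mult_right_zero)
  qed
  also have "\<dots> = complex_of_real (psi (a*t))"
    using qd_cos_int[OF assms] qd_sin_int by simp
  finally show ?thesis .
qed

lemma nu_AE: assumes "a > 0" shows "AE x in nu a. \<bar>x\<bar> \<le> a"
  unfolding nu_def by (subst AE_density) (auto simp: qd_def indicator_def)

lemma nu_atom: assumes "a > 0" shows "emeasure (nu a) {x} = 0"
  unfolding nu_def by (subst emeasure_density) auto

lemma psi_le_1: "psi u \<le> 1"
proof -
  interpret real_distribution "nu 1" by (rule nu_real_distribution) simp
  have "norm (char (nu 1) u) \<le> 1" by (rule cmod_char_le_1)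
  then show ?thesis using char_nu[of 1 u] psi_pos[of u] by simp
qed

lemma psi_cont: "continuous_on UNIV psi"
proof -
  interpret real_distribution "nu 1" by (rule nu_real_distribution) simp
  have eq: "psi = (\<lambda>u. Re (char (nu 1) u))" using char_nu[of 1] by auto
  have "\<forall>x\<in>UNIV. isCont (\<lambda>u. Re (char (nu 1) u)) x"
    using isCont_char by (auto intro!: continuous_intros)
  then have "continuous_on UNIV (\<lambda>u. Re (char (nu 1) u))" by (rule continuous_at_imp_continuous_on)
  then show ?thesis unfolding eq .
qed


lemma real_distribution_convolution:
  assumes "real_distribution M" "real_distribution N"
  shows "real_distribution (M \<star> N)"
proof -
  interpret M: real_distribution M by fact
  interpret N: real_distribution N by fact
  interpret P: pair_prob_space M N ..
  have "prob_space (distr (M \<Otimes>\<^sub>M N) borel (\<lambda>(x, y). x + y))"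
    by (rule P.prob_space_distr) simp
  then show ?thesis
    unfolding convolution_def real_distribution_def real_distribution_axioms_def by simp
qed

lemma char_convolution:
  assumes "real_distribution M" "real_distribution N"
  shows "char (M \<star> N) t = char M t * char N t"
proof -
  interpret M: real_distribution M by fact
  interpret N: real_distribution N by fact
  interpret P: pair_prob_space M N ..
  have meas[measurable]: "(\<lambda>(x,y). x + y) \<in> measurable (M \<Otimes>\<^sub>M N) borel" by simp
  have "char (M \<star> N) t = (CLINT z|M \<Otimes>\<^sub>M N. iexp (t * (fst z + snd z)))"
    unfolding char_def convolution_def
    by (subst integral_distr) (auto simp: case_prod_beta)
  also have "\<dots> = (CLINT z|M \<Otimes>\<^sub>M N. iexp (t * fst z) * iexp (t * snd z))"
    by (simp add: distrib_left exp_add algebra_simps)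
  also have "\<dots> = (CLINT x|M. (CLINT y|N. iexp (t * x) * iexp (t * y)))"
  proof -
    have "integrable (M \<Otimes>\<^sub>M N) (\<lambda>z. iexp (t * fst z) * iexp (t * snd z))"
      by (intro P.integrable_const_bound[where B=1]) (auto simp: norm_mult)
    then show ?thesis by (subst P.integral_fst'[symmetric]) auto
  qed
  also have "\<dots> = (CLINT x|M. iexp (t * x) * char N t)"
    unfolding char_def by simp
  also have "\<dots> = char M t * char N t"
    unfolding char_def by simp
  finally show ?thesis .
qed

lemma AE_convolution:
  assumes "real_distribution M" "real_distribution N"
    and "AE x in M. \<bar>x\<bar> \<le> s" "AE y in N. \<bar>y\<bar> \<le> r"
  shows "AE z in M \<star> N. \<bar>z\<bar> \<le> s + r"
proof -
  interpret M: real_distribution M by fact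
  interpret N: real_distribution N by fact
  interpret P: pair_prob_space M N ..
  have ae1: "AE x in M. AE y in N. \<bar>x + y\<bar> \<le> s + r"
    using assms(3) proof eventually_elim
    case (elim x)
    show ?case using assms(4) by eventually_elim (use elim in auto)
  qed
  have "AE z in M \<Otimes>\<^sub>M N. \<bar>fst z + snd z\<bar> \<le> s + r"
  proof (rule P.AE_pair_measure)
    show "{z \<in> space (M \<Otimes>\<^sub>M N). \<bar>fst z + snd z\<bar> \<le> s + r} \<in> sets (M \<Otimes>\<^sub>M N)"
      by measurable
  qed (use ae1 in simp)
  then show ?thesis
    unfolding convolution_def by (subst AE_distr_iff) (auto simp: case_prod_beta)
qed

lemma atom_convolution:
  assumes "real_distribution M" "real_distribution N" "\<And>x. emeasure N {x} = 0"
  shows "emeasure (M \<star> N) {z} = 0"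
proof -
  interpret M: real_distribution M by fact
  interpret N: real_distribution N by fact
  have "emeasure (M \<star> N) {z} = (\<integral>\<^sup>+x. emeasure N {b. b + x \<in> {z}} \<partial>M)"
    by (rule convolution_emeasure) (auto intro: M.finite_measure_axioms N.finite_measure_axioms)
  also have "\<dots> = (\<integral>\<^sup>+x. 0 \<partial>M)"
  proof (intro nn_integral_cong)
    fix x
    have "{b. b + x \<in> {z}} = {z - x}" by auto
    then show "emeasure N {b. b + x \<in> {z}} = 0" using assms(3) by simp
  qed
  finally show ?thesis by simp
qed

primrec muc :: "(nat \<Rightarrow> real) \<Rightarrow> nat \<Rightarrow> real measure" where
  "muc a 0 = return borel 0"
| "muc a (Suc n) = convolution (muc a n) (nu (a n))"

lemma muc_real_distribution:
  assumes "\<And>j. a j > 0" shows "real_distribution (muc a n)"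
proof (induction n)
  case 0
  show ?case by (simp add: real_distribution_def real_distribution_axioms_def prob_space_return)
next
  case (Suc n)
  then show ?case using nu_real_distribution[OF assms] by (simp add: real_distribution_convolution)
qed

definition Phin :: "(nat \<Rightarrow> real) \<Rightarrow> nat \<Rightarrow> real \<Rightarrow> real" where
  "Phin a n t = (\<Prod>j<n. psi (a j * t))"

lemma char_mu:
  assumes "\<And>j. a j > 0" shows "char (muc a n) t = complex_of_real (Phin a n t)"
proof (induction n)
  case 0
  show ?case by (simp add: char_def Phin_def integral_return)
next
  case (Suc n)
  have "char (muc a (Suc n)) t = char (muc a n) t * char (nu (a n)) t"
    using muc_real_distribution[OF assms] nu_real_distribution[OF assms] by (simp add: char_convolution)
  also have "\<dots> = complex_of_real (Phin a (Suc n) t)"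
    using Suc char_nu[OF assms] by (simp add: Phin_def)
  finally show ?case .
qed

lemma muc_AE:
  assumes "\<And>j. a j > 0" shows "AE x in muc a n. \<bar>x\<bar> \<le> (\<Sum>j<n. a j)"
proof (induction n)
  case 0
  show ?case
    apply (simp only: muc.simps(1))
    apply (subst AE_return)
      apply auto
    done
next
  case (Suc n)
  show ?case unfolding muc.simps(2) sum.lessThan_Suc
    by (rule AE_convolution[OF muc_real_distribution[OF assms] nu_real_distribution[OF assms] Suc nu_AE[OF assms]])
qed

lemma muc_atom:
  assumes "\<And>j. a j > 0" shows "emeasure (muc a (Suc n)) {x} = 0"
  using atom_convolution[OF muc_real_distribution[OF assms] nu_real_distribution[OF assms] nu_atom[OF assms]]
  by simp

lemma Phin_pos: "Phin a n t > 0"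
  unfolding Phin_def by (intro prod_pos) (auto intro: psi_pos)

lemma Phin_le1: "Phin a n t \<le> 1"
  unfolding Phin_def by (intro prod_le_1) (auto intro: psi_le_1 less_imp_le[OF psi_pos])

lemma Phin_dec: "Phin a (Suc n) t \<le> Phin a n t"
  using Phin_pos[of a n t] psi_le_1[of "a n * t"] by (simp add: Phin_def mult_left_le)

lemma Phin_decseq: "decseq (\<lambda>n. Phin a n t)"
  by (rule decseq_SucI) (rule Phin_dec)

lemma Phin_even: "Phin a n (-t) = Phin a n t"
  unfolding Phin_def using psi_even by (metis mult_minus_right)

lemma Phin_cont: "continuous_on UNIV (Phin a n)"
  unfolding Phin_def
  by (intro continuous_on_prod continuous_on_compose2[OF psi_cont] continuous_intros) auto

definition Phi :: "(nat \<Rightarrow> real) \<Rightarrow> real \<Rightarrow> real" where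
  "Phi a t = (INF n. Phin a n t)"

lemma Phin_tendsto: "(\<lambda>n. Phin a n t) \<longlonglongrightarrow> Phi a t"
  unfolding Phi_def
  by (rule LIMSEQ_decseq_INF) (auto intro: Phin_decseq bdd_belowI[where m=0] less_imp_le[OF Phin_pos])

lemma Phi_le_Phin: "Phi a t \<le> Phin a n t"
  by (rule decseq_ge[OF Phin_decseq Phin_tendsto])

lemma Phi_nonneg: "Phi a t \<ge> 0"
  by (rule LIMSEQ_le_const[OF Phin_tendsto]) (auto intro: less_imp_le[OF Phin_pos])

lemma Phi_lower: assumes "\<And>n. c \<le> Phin a n t" shows "c \<le> Phi a t"
  by (rule LIMSEQ_le_const[OF Phin_tendsto]) (use assms in auto)

lemma Phi_even: "Phi a (-t) = Phi a t"
  unfolding Phi_def Phin_even ..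

lemma Phi_meas[measurable]: "Phi a \<in> borel_measurable borel"
  by (rule borel_measurable_LIMSEQ_real[OF Phin_tendsto])
     (auto intro: borel_measurable_continuous_onI Phin_cont)


lemma cos_m1_bound: "\<bar>cos (v::real) - 1\<bar> \<le> v^2 / 2"
proof -
  have "cos v = cos (2 * (v/2))" by simp
  also have "\<dots> = 1 - 2 * sin (v/2) ^ 2" by (rule cos_double_sin)
  finally have e: "cos v - 1 = - 2 * sin (v/2) ^ 2" by simp
  have "sin (v/2) ^ 2 \<le> (v/2)^2"
    using abs_sin_x_le_abs_x[of "v/2"] by (metis abs_ge_zero power2_abs power_mono)
  then show ?thesis unfolding e by (simp add: power2_eq_square)
qed

lemma sin_m_bound: "\<bar>sin (v::real) - v\<bar> \<le> v^2 / 2"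
proof -
  have "(\<Sum>m<2. sin_coeff m * v ^ m) = v" by (simp add: numeral_eq_Suc sin_coeff_def)
  then show ?thesis using Maclaurin_sin_bound[of v 2] by (simp add: power2_eq_square)
qed

lemma abs_mult_le1: fixes x y b :: real assumes "\<bar>x\<bar> \<le> 1" "\<bar>y\<bar> \<le> b" shows "\<bar>x * y\<bar> \<le> b"
proof -
  have "\<bar>x * y\<bar> = \<bar>x\<bar> * \<bar>y\<bar>" by (simp add: abs_mult)
  also have "\<dots> \<le> 1 * \<bar>y\<bar>" using assms(1) by (intro mult_right_mono) auto
  finally show ?thesis using assms(2) by simp
qed

lemma cos_taylor2: "\<bar>cos ((u::real) + v) - cos u + v * sin u\<bar> \<le> v^2"
proof -
  have e: "cos (u + v) - cos u + v * sin u = cos u * (cos v - 1) - sin u * (sin v - v)"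
    by (simp add: cos_add algebra_simps)
  have "\<bar>cos u * (cos v - 1)\<bar> \<le> v^2/2"
    by (rule abs_mult_le1[OF abs_cos_le_one cos_m1_bound])
  moreover have "\<bar>sin u * (sin v - v)\<bar> \<le> v^2/2"
    by (rule abs_mult_le1[OF abs_sin_le_one sin_m_bound])
  ultimately show ?thesis unfolding e by linarith
qed

lemma sin_taylor2: "\<bar>sin ((u::real) + v) - sin u - v * cos u\<bar> \<le> v^2"
proof -
  have e: "sin (u + v) - sin u - v * cos u = sin u * (cos v - 1) + cos u * (sin v - v)"
    by (simp add: sin_add algebra_simps)
  have "\<bar>sin u * (cos v - 1)\<bar> \<le> v^2/2"
    by (rule abs_mult_le1[OF abs_sin_le_one cos_m1_bound])
  moreover have "\<bar>cos u * (sin v - v)\<bar> \<le> v^2/2"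
    by (rule abs_mult_le1[OF abs_cos_le_one sin_m_bound])
  ultimately show ?thesis unfolding e by linarith
qed

lemma sin_lipschitz: "\<bar>sin (a::real) - sin b\<bar> \<le> \<bar>a - b\<bar>"
proof -
  have "\<bar>sin a - sin b\<bar> = 2 * \<bar>sin ((a - b)/2)\<bar> * \<bar>cos ((a + b)/2)\<bar>"
    by (simp add: sin_diff_sin abs_mult)
  also have "\<dots> \<le> 2 * \<bar>(a - b)/2\<bar> * 1"
    by (intro mult_mono abs_sin_x_le_abs_x) auto
  finally show ?thesis by simp
qed

lemma DERIV_integral_param:
  fixes f f' :: "real \<Rightarrow> real \<Rightarrow> real" and w :: "real \<Rightarrow> real"
  assumes int: "\<And>x. integrable lborel (\<lambda>t. f t x)"
    and int': "integrable lborel (\<lambda>t. f' t x0)"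
    and intw: "integrable lborel w"
    and rem: "\<And>t d. \<bar>f t (x0 + d) - f t x0 - d * f' t x0\<bar> \<le> d^2 * w t"
  shows "((\<lambda>x. LINT t|lborel. f t x) has_real_derivative (LINT t|lborel. f' t x0)) (at x0)"
proof -
  define F where "F = (\<lambda>x. LINT t|lborel. f t x)"
  define D where "D = (LINT t|lborel. f' t x0)"
  define W where "W = (LINT t|lborel. w t)"
  have bound: "\<bar>(F (x0 + d) - F x0) / d - D\<bar> \<le> \<bar>d\<bar> * W" if "d \<noteq> 0" for d
  proof -
    have "F (x0 + d) - F x0 - d * D = (LINT t|lborel. f t (x0+d) - f t x0 - d * f' t x0)"
      unfolding F_def D_def
      using int int' by (simp add: Bochner_Integration.integral_diff integrable_mult_right)
    also have "\<bar>\<dots>\<bar> \<le> (LINT t|lborel. d^2 * w t)"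
    proof -
      have "\<bar>LINT t|lborel. f t (x0+d) - f t x0 - d * f' t x0\<bar> \<le> (LINT t|lborel. \<bar>f t (x0+d) - f t x0 - d * f' t x0\<bar>)"
        by (rule integral_abs_bound)
      also have "\<dots> \<le> (LINT t|lborel. d^2 * w t)"
        using int int' intw rem by (intro integral_mono) (auto intro!: integrable_abs)
      finally show ?thesis .
    qed
    also have "\<dots> = d^2 * W" unfolding W_def by simp
    finally have "\<bar>F (x0 + d) - F x0 - d * D\<bar> \<le> d^2 * W" .
    moreover have "(F (x0 + d) - F x0) / d - D = (F (x0 + d) - F x0 - d * D) / d"
      using that by (simp add: field_simps)
    ultimately show ?thesis using that
      by (simp add: abs_divide power2_eq_square divide_le_eq mult.commute mult.left_commute)
  qed
  have "((\<lambda>d. (F (x0 + d) - F x0) / d - D) \<longlongrightarrow> 0) (at 0)"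
  proof (rule Lim_null_comparison)
    show "\<forall>\<^sub>F d in at 0. norm ((F (x0 + d) - F x0) / d - D) \<le> \<bar>d\<bar> * W"
      using bound by (auto simp: eventually_at_filter)
    show "((\<lambda>d. \<bar>d\<bar> * W) \<longlongrightarrow> 0) (at 0)"
      by (auto intro!: tendsto_eq_intros)
  qed
  then have "((\<lambda>d. (F (x0 + d) - F x0) / d) \<longlongrightarrow> D) (at 0)"
    by (simp add: LIM_zero_iff)
  then show ?thesis unfolding F_def[symmetric] D_def[symmetric]
    by (simp add: DERIV_def)
qed

definition Cf :: "(real \<Rightarrow> real) \<Rightarrow> real \<Rightarrow> real \<Rightarrow> real" where
  "Cf h th x = (LINT t|lborel. h t * cos (t * x + th))"

lemma cos_plus_half_pi: "cos (y + pi/2) = - sin y"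
  by (simp add: cos_add)

lemma Cf_deriv:
  assumes [measurable]: "h \<in> borel_measurable borel"
    and i0: "integrable lborel h" and i1: "integrable lborel (\<lambda>t. t * h t)"
    and i2: "integrable lborel (\<lambda>t. t^2 * h t)"
  shows "(Cf h th has_real_derivative Cf (\<lambda>t. t * h t) (th + pi/2) x0) (at x0)"
proof -
  have "((\<lambda>x. LINT t|lborel. h t * cos (t * x + th)) has_real_derivative
      (LINT t|lborel. (t * h t) * cos (t * x0 + (th + pi/2)))) (at x0)"
  proof (rule DERIV_integral_param[where w="\<lambda>t. \<bar>t^2 * h t\<bar>"])
    show "integrable lborel (\<lambda>t. h t * cos (t * x + th))" for x
      by (rule Bochner_Integration.integrable_bound[OF i0]) (auto simp: abs_mult intro!: mult_left_le)
    show "integrable lborel (\<lambda>t. (t * h t) * cos (t * x0 + (th + pi/2)))"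
      by (rule Bochner_Integration.integrable_bound[OF i1]) (auto simp: abs_mult intro!: mult_left_le)
    show "integrable lborel (\<lambda>t. \<bar>t^2 * h t\<bar>)" using i2 by (rule integrable_abs)
    fix t d
    have e: "h t * cos (t * (x0 + d) + th) - h t * cos (t * x0 + th) - d * (t * h t * cos (t * x0 + (th + pi / 2)))
        = h t * (cos ((t * x0 + th) + t * d) - cos (t * x0 + th) + (t * d) * sin (t * x0 + th))"
    proof -
      have "t * x0 + (th + pi/2) = (t * x0 + th) + pi/2" by simp
      then have c: "cos (t * x0 + (th + pi/2)) = - sin (t * x0 + th)"
        using cos_plus_half_pi by metis
      show ?thesis unfolding c by (simp add: algebra_simps)
    qed
    have b: "\<bar>h t\<bar> * \<bar>cos ((t * x0 + th) + t * d) - cos (t * x0 + th) + (t * d) * sin (t * x0 + th)\<bar>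
        \<le> \<bar>h t\<bar> * (t * d)^2"
      by (intro mult_left_mono cos_taylor2) auto
    have eq: "\<bar>h t\<bar> * (t * d)^2 = d^2 * \<bar>t^2 * h t\<bar>" by (simp add: abs_mult power_mult_distrib)
    then show "\<bar>h t * cos (t * (x0 + d) + th) - h t * cos (t * x0 + th) - d * (t * h t * cos (t * x0 + (th + pi / 2)))\<bar>
        \<le> d^2 * \<bar>t^2 * h t\<bar>"
      unfolding e abs_mult[of "h t"] using b eq by linarith
  qed
  then show ?thesis unfolding Cf_def by simp
qed

lemma Cf_deriv_n:
  assumes [measurable]: "h \<in> borel_measurable borel"
    and i: "\<And>m. integrable lborel (\<lambda>t. t^m * h t)"
  shows "(deriv ^^ n) (Cf h th) = Cf (\<lambda>t. t^n * h t) (th + real n * (pi/2))"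
proof (induction n)
  case 0
  show ?case by simp
next
  case (Suc n)
  have "(deriv ^^ Suc n) (Cf h th) = deriv (Cf (\<lambda>t. t^n * h t) (th + real n * (pi/2)))"
    using Suc by simp
  also have "\<dots> = Cf (\<lambda>t. t * (t^n * h t)) (th + real n * (pi/2) + pi/2)"
  proof (rule ext, rule DERIV_imp_deriv, rule Cf_deriv)
    show "integrable lborel (\<lambda>t. t^n * h t)" by (rule i)
    show "integrable lborel (\<lambda>t. t * (t^n * h t))" using i[of "Suc n"] by (simp add: mult.assoc)
    show "integrable lborel (\<lambda>t. t^2 * (t^n * h t))" using i[of "Suc (Suc n)"]
      by (simp add: mult.assoc power2_eq_square)
  qed simp
  also have "\<dots> = Cf (\<lambda>t. t^(Suc n) * h t) (th + real (Suc n) * (pi/2))"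
  proof -
    have e1: "th + real n * (pi/2) + pi/2 = th + real (Suc n) * (pi/2)" by (simp add: algebra_simps)
    have e2: "(\<lambda>t. t * (t^n * h t)) = (\<lambda>t. t^(Suc n) * h t)" by (simp add: mult.assoc)
    show ?thesis by (simp only: e1 e2)
  qed
  finally show ?case .
qed

lemma Cf_smooth:
  assumes [measurable]: "h \<in> borel_measurable borel"
    and i: "\<And>m. integrable lborel (\<lambda>t. t^m * h t)"
  shows "((deriv ^^ n) (\<lambda>x. c * Cf h th x)) differentiable (at x)"
proof -
  have "(deriv ^^ n) (\<lambda>x. c * Cf h th x) = (\<lambda>x. c * (deriv ^^ n) (Cf h th) x)"
  proof (induction n)
    case (Suc n)
    have "(deriv ^^ Suc n) (\<lambda>x. c * Cf h th x) = deriv (\<lambda>x. c * (deriv ^^ n) (Cf h th) x)"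
      using Suc by simp
    also have "\<dots> = (\<lambda>x. c * (deriv ^^ Suc n) (Cf h th) x)"
    proof (rule ext, rule DERIV_imp_deriv)
      fix x
      have "((deriv ^^ n) (Cf h th) has_real_derivative Cf (\<lambda>t. t * (t^n * h t)) (th + real n * (pi/2) + pi/2) x) (at x)"
        unfolding Cf_deriv_n[OF assms(1) i]
      proof (rule Cf_deriv)
        show "integrable lborel (\<lambda>t. t^n * h t)" by (rule i)
        show "integrable lborel (\<lambda>t. t * (t^n * h t))" using i[of "Suc n"] by (simp add: mult.assoc)
        show "integrable lborel (\<lambda>t. t^2 * (t^n * h t))" using i[of "Suc (Suc n)"]
          by (simp add: mult.assoc power2_eq_square)
      qed simp
      then have "((deriv ^^ n) (Cf h th) has_real_derivative (deriv ^^ Suc n) (Cf h th) x) (at x)"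
        by (simp add: DERIV_imp_deriv)
      then show "((\<lambda>x. c * (deriv ^^ n) (Cf h th) x) has_real_derivative c * (deriv ^^ Suc n) (Cf h th) x) (at x)"
        by (rule DERIV_cmult)
    qed
    finally show ?case .
  qed simp
  moreover have "((deriv ^^ n) (Cf h th) has_real_derivative Cf (\<lambda>t. t * (t^n * h t)) (th + real n * (pi/2) + pi/2) x) (at x)"
    unfolding Cf_deriv_n[OF assms(1) i]
  proof (rule Cf_deriv)
    show "integrable lborel (\<lambda>t. t^n * h t)" by (rule i)
    show "integrable lborel (\<lambda>t. t * (t^n * h t))" using i[of "Suc n"] by (simp add: mult.assoc)
    show "integrable lborel (\<lambda>t. t^2 * (t^n * h t))" using i[of "Suc (Suc n)"]
      by (simp add: mult.assoc power2_eq_square)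
  qed simp
  then have "((\<lambda>x. c * (deriv ^^ n) (Cf h th) x) has_real_derivative c * Cf (\<lambda>t. t * (t^n * h t)) (th + real n * (pi/2) + pi/2) x) (at x)"
    by (rule DERIV_cmult)
  ultimately show ?thesis
    by (auto simp: differentiable_def has_field_derivative_def)
qed


lemma onep: "(0::real) < 1 + x^2" using zero_le_power2[of x] by linarith

lemma psi_upper: "psi u \<le> 24 / (1 + u^2)"
proof (cases "\<bar>u\<bar> \<le> 1")
  case True
  have "u^2 \<le> 1" using True by (simp add: abs_le_square_iff[symmetric] abs_square_le_1)
  moreover have p: "(0::real) < 1 + u^2" using zero_le_power2[of u] by linarith
  ultimately have "1 \<le> 24 / (1 + u^2)" by (simp add: le_divide_eq)
  then show ?thesis using psi_le_1[of u] by linarith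
next
  case False
  then have u1: "\<bar>u\<bar> \<ge> 1" by simp
  have "1 * 1 \<le> \<bar>u\<bar> * \<bar>u\<bar>" using u1 by (intro mult_mono) auto
  then have "1 \<le> u^2" by (simp add: power2_eq_square abs_mult_self_eq)
  then have "12 / u^2 \<le> 24 / (1 + u^2)"
  proof -
    assume h: "1 \<le> u^2"
    have p: "(0::real) < 1 + u^2" using zero_le_power2[of u] by linarith
    have "12 / u^2 = 24 / (2 * u^2)" by simp
    also have "\<dots> \<le> 24 / (1 + u^2)" using h p by (intro divide_left_mono) (auto intro!: mult_pos_pos)
    finally show ?thesis .
  qed
  then show ?thesis using psi_upper_large[OF u1] by linarith
qed

lemma psi_upper2: assumes "b > 0" shows "psi (b * t) \<le> (24 / min 1 (b^2)) * inverse (1 + t^2)"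
proof -
  define c where "c = min 1 (b^2)"
  have c0: "c > 0" using assms by (simp add: c_def)
  have "c * (1 + t^2) \<le> 1 + (b*t)^2"
  proof -
    have "c \<le> 1" "c \<le> b^2" by (auto simp: c_def)
    then have "c * t^2 \<le> b^2 * t^2" by (intro mult_right_mono) auto
    then show ?thesis using \<open>c \<le> 1\<close> by (simp add: algebra_simps power_mult_distrib)
  qed
  then have "24 / (1 + (b*t)^2) \<le> 24 / (c * (1 + t^2))"
    using c0 onep[of "b*t"] onep[of t] by (intro divide_left_mono) (auto intro!: mult_pos_pos)
  also have "\<dots> = (24 / c) * inverse (1 + t^2)" by (simp add: field_simps)
  finally show ?thesis using psi_upper[of "b*t"] unfolding c_def by linarith
qed

lemma abs_pow_le: "\<bar>t::real\<bar>^m \<le> (1 + t^2)^m"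
proof -
  have "\<bar>t\<bar> \<le> 1 + t^2"
  proof (cases "\<bar>t\<bar> \<le> 1")
    case True then show ?thesis by (smt (verit) zero_le_power2)
  next
    case False
    then have "\<bar>t\<bar> \<le> \<bar>t\<bar> * \<bar>t\<bar>" by (intro mult_le_cancel_left1[THEN iffD2]) auto
    then show ?thesis by (simp add: power2_eq_square abs_mult_self_eq)
  qed
  then show ?thesis by (intro power_mono) auto
qed

locale seqa =
  fixes a :: "nat \<Rightarrow> real"
  assumes apos: "\<And>j. a j > 0" and asum: "summable a"
begin

lemma Phin_poly_bound: "\<exists>K. \<forall>t. \<bar>t\<bar>^m * Phin a (Suc m) t \<le> K * inverse (1 + t^2)"
proof -
  define K where "K = (\<Prod>j<Suc m. 24 / min 1 ((a j)^2))"
  have "\<bar>t\<bar>^m * Phin a (Suc m) t \<le> K * inverse (1 + t^2)" for t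
  proof -
    have "Phin a (Suc m) t \<le> (\<Prod>j<Suc m. (24 / min 1 ((a j)^2)) * inverse (1 + t^2))"
      unfolding Phin_def
      by (intro prod_mono conjI psi_upper2 apos less_imp_le[OF psi_pos])
    also have "\<dots> = K * inverse (1 + t^2) ^ Suc m"
      unfolding K_def by (simp only: prod.distrib prod_constant card_lessThan)
    finally have p: "Phin a (Suc m) t \<le> K * inverse (1 + t^2) ^ Suc m" .
    have K0: "K \<ge> 0" unfolding K_def by (intro prod_nonneg) auto
    have "\<bar>t\<bar>^m * Phin a (Suc m) t \<le> (1 + t^2)^m * (K * inverse (1 + t^2) ^ Suc m)"
      using p abs_pow_le[of t m] Phin_pos[of a "Suc m" t] K0
      by (intro mult_mono) auto
    also have "\<dots> = K * inverse (1 + t^2)"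
    proof -
      have x0: "1 + t^2 \<noteq> 0" using onep[of t] by simp
      have "(1 + t^2)^m * inverse (1 + t^2)^m = 1"
        using x0 by (simp add: power_mult_distrib[symmetric])
      then show ?thesis by (simp add: power_Suc algebra_simps)
    qed
    finally show ?thesis .
  qed
  then show ?thesis by blast
qed

lemma int_inv: "integrable lborel (\<lambda>t::real. inverse (1 + t^2))"
  using integrable_inverse_1_plus_square by (simp add: set_integrable_def)

lemma Phin_meas[measurable]: "Phin a n \<in> borel_measurable borel"
  by (rule borel_measurable_continuous_onI[OF Phin_cont])

lemma Phi_moment_int: "integrable lborel (\<lambda>t. t^m * Phi a t)"
proof -
  obtain K where K: "\<And>t. \<bar>t\<bar>^m * Phin a (Suc m) t \<le> K * inverse (1 + t^2)"
    using Phin_poly_bound by blast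
  show ?thesis
  proof (rule Bochner_Integration.integrable_bound[where f="\<lambda>t. K * inverse (1 + t^2)"])
    show "integrable lborel (\<lambda>t. K * inverse (1 + t^2))" using int_inv by simp
    show "(\<lambda>t. t^m * Phi a t) \<in> borel_measurable lborel" by measurable
    show "AE t in lborel. norm (t^m * Phi a t) \<le> norm (K * inverse (1 + t^2))"
    proof (intro AE_I2)
      fix t
      have "norm (t^m * Phi a t) = \<bar>t\<bar>^m * Phi a t" using Phi_nonneg by (simp add: abs_mult power_abs)
      also have "\<dots> \<le> \<bar>t\<bar>^m * Phin a (Suc m) t" by (intro mult_left_mono Phi_le_Phin) auto
      also have "\<dots> \<le> K * inverse (1 + t^2)" by (rule K)
      also have "\<dots> \<le> norm (K * inverse (1 + t^2))" by simp
      finally show "norm (t^m * Phi a t) \<le> norm (K * inverse (1 + t^2))" .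
    qed
  qed
qed

lemma Phin_int: "integrable lborel (Phin a (Suc n))"
proof -
  obtain K where K: "\<And>t. \<bar>t\<bar>^0 * Phin a (Suc 0) t \<le> K * inverse (1 + t^2)"
    using Phin_poly_bound by blast
  show ?thesis
  proof (rule Bochner_Integration.integrable_bound[where f="\<lambda>t. K * inverse (1 + t^2)"])
    show "integrable lborel (\<lambda>t. K * inverse (1 + t^2))" using int_inv by simp
    show "Phin a (Suc n) \<in> borel_measurable lborel" by measurable
    show "AE t in lborel. norm (Phin a (Suc n) t) \<le> norm (K * inverse (1 + t^2))"
    proof (intro AE_I2)
      fix t
      have "norm (Phin a (Suc n) t) = Phin a (Suc n) t" using Phin_pos[of a "Suc n" t] by simp
      also have "\<dots> \<le> Phin a (Suc 0) t" using decseqD[OF Phin_decseq, of "Suc 0" "Suc n"] by simp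
      also have "\<dots> \<le> K * inverse (1 + t^2)" using K[of t] by simp
      also have "\<dots> \<le> norm (K * inverse (1 + t^2))" by simp
      finally show "norm (Phin a (Suc n) t) \<le> norm (K * inverse (1 + t^2))" .
    qed
  qed
qed

lemma Phi_int: "integrable lborel (Phi a)"
  using Phi_moment_int[of 0] by simp

lemma Phi_lower_exp:
  assumes d: "0 < d" "d \<le> 1" and sd: "summable (\<lambda>j. a j powr d)"
  shows "Phi a t \<ge> exp (- ((2/d + 1) * (\<Sum>j. a j powr d) * \<bar>t\<bar> powr d))"
proof (rule Phi_lower)
  fix n
  define C where "C = 2/d + 1"
  have C0: "C \<ge> 0" using d by (simp add: C_def)
  have "exp (- (C * (\<Sum>j. a j powr d) * \<bar>t\<bar> powr d)) \<le> exp (- (C * (\<Sum>j<n. a j powr d) * \<bar>t\<bar> powr d))"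
  proof -
    have "(\<Sum>j<n. a j powr d) \<le> (\<Sum>j. a j powr d)"
      by (rule sum_le_suminf[OF sd]) auto
    then have "C * (\<Sum>j<n. a j powr d) * \<bar>t\<bar> powr d \<le> C * (\<Sum>j. a j powr d) * \<bar>t\<bar> powr d"
      using C0 by (intro mult_right_mono mult_left_mono) auto
    then show ?thesis by simp
  qed
  also have "\<dots> = (\<Prod>j<n. exp (- (C * \<bar>a j * t\<bar> powr d)))"
  proof -
    have "\<bar>a j * t\<bar> powr d = a j powr d * \<bar>t\<bar> powr d" for j
      using apos[of j] by (simp add: abs_mult powr_mult)
    then have "- (C * (\<Sum>j<n. a j powr d) * \<bar>t\<bar> powr d) = (\<Sum>j<n. - (C * \<bar>a j * t\<bar> powr d))"
      by (simp add: sum_distrib_left sum_distrib_right sum_negf algebra_simps)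
    then show ?thesis by (simp add: exp_sum)
  qed
  also have "\<dots> \<le> Phin a n t"
    unfolding Phin_def C_def
    by (intro prod_mono conjI psi_lower_exp d) auto
  finally show "exp (- ((2/d + 1) * (\<Sum>j. a j powr d) * \<bar>t\<bar> powr d)) \<le> Phin a n t"
    unfolding C_def .
qed

end


definition Kc :: "real \<Rightarrow> real \<Rightarrow> real \<Rightarrow> complex" where
  "Kc x y t = (iexp (-(t*x)) - iexp (-(t*y))) / (\<i> * complex_of_real t)"

definition Kr :: "real \<Rightarrow> real \<Rightarrow> real \<Rightarrow> real" where
  "Kr x y t = (sin (t*y) - sin (t*x)) / t"

lemma Re_Kc: "Re (Kc x y t) = Kr x y t"
proof (cases "t = 0")
  case True then show ?thesis by (simp add: Kc_def Kr_def)
next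
  case False
  have e: "Kc x y t = (- \<i> * (iexp (-(t*x)) - iexp (-(t*y)))) / complex_of_real t"
    unfolding Kc_def using False by (simp add: field_simps)
  have h: "Re (- \<i> * (iexp (-(t*x)) - iexp (-(t*y)))) = sin (t*y) - sin (t*x)"
    by (simp add: Im_exp Re_exp)
  show ?thesis by (simp only: e Re_divide_of_real h Kr_def)
qed

lemma Kr_bound: "\<bar>Kr x y t\<bar> \<le> \<bar>y - x\<bar>"
proof (cases "t = 0")
  case True then show ?thesis by (simp add: Kr_def)
next
  case False
  have "\<bar>sin (t*y) - sin (t*x)\<bar> \<le> \<bar>t*y - t*x\<bar>" by (rule sin_lipschitz)
  also have "\<dots> = \<bar>t\<bar> * \<bar>y - x\<bar>" by (simp add: abs_mult[symmetric] algebra_simps)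
  finally show ?thesis using False by (simp add: Kr_def abs_divide divide_le_eq mult.commute)
qed

lemma Kc_bound: assumes "x \<le> y" shows "norm (Kc x y t) \<le> y - x"
proof (cases "t = 0")
  case True then show ?thesis using assms by (simp add: Kc_def)
next
  case False
  have "Kc x y t = (iexp (-t * y) - iexp (-t * x)) / (\<i> * complex_of_real (-t))"
    unfolding Kc_def using False by (simp add: field_simps)
  then show ?thesis using Levy_Inversion_aux2[OF assms, of "-t"] False by simp
qed

lemma Kc_meas[measurable]: "Kc x y \<in> borel_measurable borel"
  unfolding Kc_def by measurable

lemma Kr_meas[measurable]: "Kr x y \<in> borel_measurable borel"
  unfolding Kr_def by measurable

lemma CLBINT_sym_tendsto:
  fixes G :: "real \<Rightarrow> complex"
  assumes G: "integrable lborel G"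
  shows "(\<lambda>T::nat. CLBINT t=ereal (- real T)..ereal (real T). G t) \<longlonglongrightarrow> (CLINT t|lborel. G t)"
proof -
  have [measurable]: "G \<in> borel_measurable borel" using G by (simp add: borel_measurable_integrable)
  have eq: "(CLBINT t=ereal (- real T)..ereal (real T). G t) = (CLINT t|lborel. indicator {- real T..real T} t *\<^sub>R G t)" for T
    by (simp add: interval_integral_Icc set_lebesgue_integral_def)
  show ?thesis unfolding eq
  proof (rule integral_dominated_convergence[where w="\<lambda>t. norm (G t)"])
    show "integrable lborel (\<lambda>t. norm (G t))" using G by (rule integrable_norm)
    show "AE t in lborel. (\<lambda>T. indicator {- real T..real T} t *\<^sub>R G t) \<longlonglongrightarrow> G t"
    proof (rule AE_I2)
      fix t :: real
      obtain N :: nat where N: "\<bar>t\<bar> \<le> real N" using real_arch_simple by blast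
      have "eventually (\<lambda>T. indicator {- real T..real T} t *\<^sub>R G t = G t) sequentially"
        unfolding eventually_sequentially
      proof (intro exI allI impI)
        fix T assume "N \<le> T"
        then have "\<bar>t\<bar> \<le> real T" using N by linarith
        then show "indicator {- real T..real T} t *\<^sub>R G t = G t" by (auto simp: indicator_def)
      qed
      then show "(\<lambda>T. indicator {- real T..real T} t *\<^sub>R G t) \<longlonglongrightarrow> G t"
        by (rule tendsto_eventually)
    qed
    show "AE t in lborel. norm (indicator {- real T..real T} t *\<^sub>R G t) \<le> norm (G t)" for T
      by (intro AE_I2) (auto simp: indicator_def)
  qed auto
qed

context seqa begin

lemma muc_rd: "real_distribution (muc a n)"
  by (rule muc_real_distribution[OF apos])

lemma meas_formula:
  assumes xy: "x \<le> y"
  shows "measure (muc a (Suc n)) {x<..y} = 1/(2*pi) * (LINT t|lborel. Kr x y t * Phin a (Suc n) t)"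
proof -
  define M where "M = muc a (Suc n)"
  interpret real_distribution M unfolding M_def by (rule muc_rd)
  have atom: "measure M {z} = 0" for z
  proof -
    have "emeasure (muc a (Suc n)) {z} = 0" by (rule muc_atom) (rule apos)
    then show ?thesis unfolding M_def by (simp add: measure_def)
  qed
  define G where "G = (\<lambda>t. Kc x y t * complex_of_real (Phin a (Suc n) t))"
  have Gint: "integrable lborel G"
  proof (rule Bochner_Integration.integrable_bound[where f="\<lambda>t. (y - x) * Phin a (Suc n) t"])
    show "integrable lborel (\<lambda>t. (y - x) * Phin a (Suc n) t)" using Phin_int by simp
    show "G \<in> borel_measurable lborel" unfolding G_def by measurable
    show "AE t in lborel. norm (G t) \<le> norm ((y - x) * Phin a (Suc n) t)"
    proof (intro AE_I2)
      fix t
      have "norm (G t) = norm (Kc x y t) * Phin a (Suc n) t"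
        unfolding G_def using Phin_pos[of a "Suc n" t] by (simp add: norm_mult)
      also have "\<dots> \<le> (y - x) * Phin a (Suc n) t"
        using Kc_bound[OF xy, of t] Phin_pos[of a "Suc n" t] by (intro mult_right_mono) auto
      also have "\<dots> \<le> norm ((y - x) * Phin a (Suc n) t)" by simp
      finally show "norm (G t) \<le> norm ((y - x) * Phin a (Suc n) t)" .
    qed
  qed
  have L1: "(\<lambda>T::nat. complex_of_real (1 / (2 * pi)) *
       (CLBINT t=ereal (real_of_int (- int T))..ereal (real T). Kc x y t * char M t))
     \<longlonglongrightarrow> complex_of_real (measure M {x<..y})"
    using Levy_Inversion[OF xy atom atom] unfolding Kc_def .
  have cM: "char M t = complex_of_real (Phin a (Suc n) t)" for t
    unfolding M_def by (rule char_mu) (rule apos)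
  have L2: "(\<lambda>T::nat. complex_of_real (1 / (2 * pi)) *
       (CLBINT t=ereal (real_of_int (- int T))..ereal (real T). Kc x y t * char M t))
     \<longlonglongrightarrow> complex_of_real (1 / (2 * pi)) * (CLINT t|lborel. G t)"
    unfolding cM G_def[symmetric] using CLBINT_sym_tendsto[OF Gint]
    by (intro tendsto_mult_left) simp
  have "complex_of_real (measure M {x<..y}) = complex_of_real (1 / (2 * pi)) * (CLINT t|lborel. G t)"
    using LIMSEQ_unique[OF L1 L2] .
  then have "measure M {x<..y} = Re (complex_of_real (1 / (2 * pi)) * (CLINT t|lborel. G t))"
    by (metis Re_complex_of_real)
  also have "\<dots> = 1 / (2 * pi) * Re (CLINT t|lborel. G t)" by simp
  also have "Re (CLINT t|lborel. G t) = (LINT t|lborel. Re (G t))"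
    using Gint by simp
  also have "(LINT t|lborel. Re (G t)) = (LINT t|lborel. Kr x y t * Phin a (Suc n) t)"
    unfolding G_def by (simp add: Re_Kc)
  finally show ?thesis unfolding M_def by simp
qed

definition J :: "real \<Rightarrow> real \<Rightarrow> real" where
  "J x y = 1/(2*pi) * (LINT t|lborel. Kr x y t * Phi a t)"

lemma J_lim:
  assumes xy: "x \<le> y"
  shows "(\<lambda>n. measure (muc a (Suc n)) {x<..y}) \<longlonglongrightarrow> J x y"
proof -
  have "(\<lambda>n. LINT t|lborel. Kr x y t * Phin a (Suc n) t) \<longlonglongrightarrow> (LINT t|lborel. Kr x y t * Phi a t)"
  proof (rule integral_dominated_convergence[where w="\<lambda>t. \<bar>y - x\<bar> * Phin a (Suc 0) t"])
    show "integrable lborel (\<lambda>t. \<bar>y - x\<bar> * Phin a (Suc 0) t)" using Phin_int by simp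
    show "AE t in lborel. (\<lambda>n. Kr x y t * Phin a (Suc n) t) \<longlonglongrightarrow> Kr x y t * Phi a t"
      by (intro AE_I2 tendsto_mult_left) (rule LIMSEQ_Suc[OF Phin_tendsto])
    show "AE t in lborel. norm (Kr x y t * Phin a (Suc n) t) \<le> \<bar>y - x\<bar> * Phin a (Suc 0) t" for n
    proof (intro AE_I2)
      fix t
      have "norm (Kr x y t * Phin a (Suc n) t) = \<bar>Kr x y t\<bar> * Phin a (Suc n) t"
        using Phin_pos[of a "Suc n" t] by (simp add: abs_mult)
      also have "\<dots> \<le> \<bar>y - x\<bar> * Phin a (Suc 0) t"
        using Kr_bound[of x y t] Phin_pos[of a "Suc n" t] decseqD[OF Phin_decseq, of "Suc 0" "Suc n"]
        by (intro mult_mono) auto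
      finally show "norm (Kr x y t * Phin a (Suc n) t) \<le> \<bar>y - x\<bar> * Phin a (Suc 0) t" .
    qed
  qed auto
  then show ?thesis unfolding J_def meas_formula[OF xy]
    by (intro tendsto_mult_left)
qed

end


context seqa begin

definition S :: real where "S = suminf a"

lemma sum_le_S: "(\<Sum>j<n. a j) \<le> S"
  unfolding S_def by (rule sum_le_suminf[OF asum]) (auto intro: less_imp_le[OF apos])

lemma S_nonneg: "S \<ge> 0"
  using sum_le_S[of 0] by simp

lemma muc_AE_S: "AE z in muc a n. \<bar>z\<bar> \<le> S"
  using muc_AE[of a n] apos sum_le_S[of n] by (auto elim: AE_mp)

lemma J_nonneg: "x \<le> y \<Longrightarrow> 0 \<le> J x y"
  by (rule LIMSEQ_le_const[OF J_lim]) auto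

lemma J_mono: assumes "x \<le> y" "y \<le> y'" shows "J x y \<le> J x y'"
proof (rule LIMSEQ_le[OF J_lim J_lim])
  show "x \<le> y" "x \<le> y'" using assms by auto
  show "\<exists>N. \<forall>n\<ge>N. measure (muc a (Suc n)) {x<..y} \<le> measure (muc a (Suc n)) {x<..y'}"
  proof (intro exI allI impI)
    fix n
    interpret real_distribution "muc a (Suc n)" by (rule muc_rd)
    show "measure (muc a (Suc n)) {x<..y} \<le> measure (muc a (Suc n)) {x<..y'}"
      using assms by (intro finite_measure_mono) auto
  qed
qed

lemma J_const: assumes "x \<le> y" "S \<le> y" "y \<le> y'" shows "J x y' = J x y"
proof -
  have "measure (muc a (Suc n)) {x<..y'} = measure (muc a (Suc n)) {x<..y}" for n
  proof -
    interpret real_distribution "muc a (Suc n)" by (rule muc_rd)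
    show ?thesis
      by (rule measure_eq_AE) (use muc_AE_S[of "Suc n"] assms in \<open>auto elim!: AE_mp\<close>)
  qed
  then show ?thesis using J_lim[of x y] J_lim[of x y'] assms
    by (auto intro: LIMSEQ_unique)
qed

lemma J_zero: assumes "x \<le> y" "y < -S" shows "J x y = 0"
proof -
  have "measure (muc a (Suc n)) {x<..y} = measure (muc a (Suc n)) {}" for n
  proof -
    interpret real_distribution "muc a (Suc n)" by (rule muc_rd)
    show ?thesis
      by (rule measure_eq_AE) (use muc_AE_S[of "Suc n"] assms in \<open>auto elim!: AE_mp\<close>)
  qed
  then have "(\<lambda>n. measure (muc a (Suc n)) {x<..y}) \<longlonglongrightarrow> 0" by simp
  then show ?thesis using J_lim[of x y] assms by (auto intro: LIMSEQ_unique)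
qed

lemma J_one: assumes "x < -S" "S \<le> y" shows "J x y = 1"
proof -
  have "measure (muc a (Suc n)) {x<..y} = 1" for n
  proof -
    interpret real_distribution "muc a (Suc n)" by (rule muc_rd)
    have "measure (muc a (Suc n)) {x<..y} = measure (muc a (Suc n)) (space (muc a (Suc n)))"
      by (rule measure_eq_AE) (use muc_AE_S[of "Suc n"] assms in \<open>auto elim!: AE_mp\<close>)
    then show ?thesis using prob_space by simp
  qed
  then have "(\<lambda>n. measure (muc a (Suc n)) {x<..y}) \<longlonglongrightarrow> 1" by simp
  then show ?thesis using J_lim[of x y] assms S_nonneg by (auto intro: LIMSEQ_unique)
qed

lemma J_refl: "J x x = 0"
  unfolding J_def Kr_def by simp

definition gg :: "real \<Rightarrow> real" where
  "gg y = 1/(2*pi) * Cf (Phi a) 0 y"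

lemma J_deriv: "(J x has_real_derivative gg y0) (at y0)"
proof -
  define f where "f = (\<lambda>t y. Kr x y t * Phi a t)"
  define f' where "f' = (\<lambda>t y0. if t = 0 then 0 else Phi a t * cos (t * y0))"
  have "((\<lambda>y. LINT t|lborel. f t y) has_real_derivative (LINT t|lborel. f' t y0)) (at y0)"
  proof (rule DERIV_integral_param[where w="\<lambda>t. \<bar>t^1 * Phi a t\<bar>"])
    show "integrable lborel (\<lambda>t. f t y)" for y
    proof (rule Bochner_Integration.integrable_bound[where f="\<lambda>t. \<bar>y - x\<bar> * Phi a t"])
      show "integrable lborel (\<lambda>t. \<bar>y - x\<bar> * Phi a t)" using Phi_int by simp
      show "(\<lambda>t. f t y) \<in> borel_measurable lborel" unfolding f_def by measurable
      show "AE t in lborel. norm (f t y) \<le> norm (\<bar>y - x\<bar> * Phi a t)"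
        unfolding f_def using Kr_bound Phi_nonneg
        by (intro AE_I2) (auto simp: abs_mult intro!: mult_right_mono)
    qed
    show "integrable lborel (\<lambda>t. f' t y0)"
    proof (rule Bochner_Integration.integrable_bound[where f="Phi a"])
      show "integrable lborel (Phi a)" by (rule Phi_int)
      show "(\<lambda>t. f' t y0) \<in> borel_measurable lborel" unfolding f'_def by measurable
      show "AE t in lborel. norm (f' t y0) \<le> norm (Phi a t)"
        unfolding f'_def using Phi_nonneg
        by (intro AE_I2) (auto simp: abs_mult intro!: mult_left_le)
    qed
    show "integrable lborel (\<lambda>t. \<bar>t^1 * Phi a t\<bar>)" by (intro integrable_abs Phi_moment_int)
    fix t d
    show "\<bar>f t (y0 + d) - f t y0 - d * f' t y0\<bar> \<le> d^2 * \<bar>t^1 * Phi a t\<bar>"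
    proof (cases "t = 0")
      case True then show ?thesis by (simp add: f_def f'_def Kr_def)
    next
      case False
      have e: "f t (y0 + d) - f t y0 - d * f' t y0
          = Phi a t / t * (sin (t*y0 + t*d) - sin (t*y0) - (t*d) * cos (t*y0))"
        unfolding f_def f'_def Kr_def using False by (simp add: field_simps)
      have "\<bar>Phi a t / t\<bar> * \<bar>sin (t*y0 + t*d) - sin (t*y0) - (t*d) * cos (t*y0)\<bar> \<le> \<bar>Phi a t / t\<bar> * (t*d)^2"
        by (intro mult_left_mono sin_taylor2) auto
      also have "\<bar>Phi a t / t\<bar> * (t*d)^2 = d^2 * \<bar>t^1 * Phi a t\<bar>"
        using False by (simp add: abs_mult abs_divide power2_eq_square field_simps)
      finally show ?thesis unfolding e abs_mult[of "Phi a t / t"] .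
    qed
  qed
  moreover have "(LINT t|lborel. f' t y0) = Cf (Phi a) 0 y0"
  proof -
    have ae: "AE t in lborel. f' t y0 = Phi a t * cos (t * y0 + 0)"
      using AE_lborel_singleton[of "0::real"] by eventually_elim (simp add: f'_def)
    have m1: "(\<lambda>t. f' t y0) \<in> borel_measurable lborel" unfolding f'_def by measurable
    have m2: "(\<lambda>t. Phi a t * cos (t * y0 + 0)) \<in> borel_measurable lborel" by measurable
    show ?thesis unfolding Cf_def by (rule integral_cong_AE[OF m1 m2 ae])
  qed
  ultimately have "((\<lambda>y. LINT t|lborel. f t y) has_real_derivative Cf (Phi a) 0 y0) (at y0)" by simp
  then have "((\<lambda>y. 1/(2*pi) * (LINT t|lborel. f t y)) has_real_derivative 1/(2*pi) * Cf (Phi a) 0 y0) (at y0)"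
    by (rule DERIV_cmult)
  then show ?thesis unfolding J_def gg_def f_def by simp
qed

lemma gg_nonneg: "gg y \<ge> 0"
proof (rule ccontr)
  assume "\<not> gg y \<ge> 0"
  then have "gg y < 0" by simp
  from DERIV_neg_dec_right[OF J_deriv[of "y - 1" y] this]
  obtain d where d: "d > 0" "\<And>h. h > 0 \<Longrightarrow> h < d \<Longrightarrow> J (y - 1) (y + h) < J (y - 1) y" by blast
  have "J (y - 1) (y + d/2) < J (y - 1) y" using d by simp
  moreover have "J (y - 1) y \<le> J (y - 1) (y + d/2)" using d by (intro J_mono) auto
  ultimately show False by simp
qed

lemma gg_zero: assumes "\<bar>y\<bar> > S" shows "gg y = 0"
proof (cases "y > S")
  case True
  have d1: "((\<lambda>_. J S S) has_real_derivative 0) (at y)" by simp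
  have "(J S has_real_derivative 0) (at y)"
  proof (rule has_field_derivative_transform_within_open[OF d1])
    show "open {S<..}" by simp
    show "y \<in> {S<..}" using True by simp
    fix z assume "z \<in> {S<..}"
    then show "J S S = J S z" using J_const[of S S z] by simp
  qed
  then show ?thesis using J_deriv[of S y] DERIV_unique by blast
next
  case False
  then have y: "y < -S" using assms by auto
  have d1: "((\<lambda>_. 0) has_real_derivative 0) (at y)" by simp
  have "(J (y - 1) has_real_derivative 0) (at y)"
  proof (rule has_field_derivative_transform_within_open[OF d1])
    show "open {y - 1<..<-S}" by simp
    show "y \<in> {y - 1<..<-S}" using y by simp
    fix z assume "z \<in> {y - 1<..<-S}"
    then show "0 = J (y - 1) z" using J_zero[of "y - 1" z] by simp
  qed
  then show ?thesis using J_deriv[of "y - 1" y] DERIV_unique by blast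
qed

lemma gg_cont: "isCont gg y"
proof -
  have "(Cf (Phi a) 0 has_real_derivative Cf (\<lambda>t. t * Phi a t) (0 + pi/2) y) (at y)"
  proof (rule Cf_deriv)
    show "integrable lborel (Phi a)" by (rule Phi_int)
    show "integrable lborel (\<lambda>t. t * Phi a t)" using Phi_moment_int[of 1] by simp
    show "integrable lborel (\<lambda>t. t^2 * Phi a t)" by (rule Phi_moment_int)
  qed simp
  then have "isCont (Cf (Phi a) 0) y" by (rule DERIV_isCont)
  then have "isCont (\<lambda>y. 1/(2*pi) * Cf (Phi a) 0 y) y" by (intro continuous_intros)
  then show ?thesis unfolding gg_def .
qed

lemma gg_cont_on: "continuous_on A gg"
  by (intro continuous_at_imp_continuous_on ballI gg_cont)

lemma gg_meas[measurable]: "gg \<in> borel_measurable borel"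
  by (rule borel_measurable_continuous_onI[OF gg_cont_on])

lemma gg_even: "gg (-y) = gg y"
  unfolding gg_def Cf_def by simp

lemma gg_FTC: assumes "x \<le> y" shows "(LBINT z=ereal x..ereal y. gg z) = J x y"
proof -
  have "(LBINT z=ereal x..ereal y. gg z) = J x y - J x x"
  proof (rule interval_integral_FTC_finite)
    show "continuous_on {min x y..max x y} gg" by (rule gg_cont_on)
    fix z
    show "(J x has_vector_derivative gg z) (at z within {min x y..max x y})"
      using J_deriv[of x z]
      by (simp add: has_real_derivative_iff_has_vector_derivative[symmetric] has_field_derivative_at_within)
  qed
  then show ?thesis by (simp add: J_refl)
qed

definition x0 :: real where "x0 = - S - 1"

lemma gg_outside: "y \<le> x0 \<Longrightarrow> gg y = 0" "y \<ge> - x0 \<Longrightarrow> gg y = 0"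
  unfolding x0_def using S_nonneg by (auto intro!: gg_zero)

lemma gg_indicator: "x \<le> x0 \<Longrightarrow> gg y * indicator {..z} y = indicator {x..z} y *\<^sub>R gg y"
  using gg_outside(1)[of y] by (auto simp: indicator_def)

lemma gg_integrable: "integrable lborel gg"
proof -
  have "set_integrable lborel {x0..-x0} gg"
    by (rule borel_integrable_atLeastAtMost'[OF gg_cont_on])
  moreover have "(\<lambda>y. indicator {x0..-x0} y *\<^sub>R gg y) = gg"
  proof
    fix y
    show "indicator {x0..-x0} y *\<^sub>R gg y = gg y"
    proof (cases "y \<in> {x0..-x0}")
      case False
      then have "y \<le> x0 \<or> y \<ge> -x0" by auto
      then show ?thesis using gg_outside False by auto
    qed simp
  qed
  ultimately show ?thesis unfolding set_integrable_def by simp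
qed

lemma gg_cdf: assumes "x0 \<le> z" shows "(LINT y|lborel. gg y * indicator {..z} y) = J x0 z"
proof -
  have "(LINT y|lborel. gg y * indicator {..z} y) = (LBINT y:{x0..z}. gg y)"
    unfolding set_lebesgue_integral_def by (intro Bochner_Integration.integral_cong refl gg_indicator order_refl)
  also have "\<dots> = J x0 z" using gg_FTC[OF assms] assms by (simp add: interval_integral_Icc)
  finally show ?thesis .
qed

lemma gg_int_one: "(LINT y|lborel. gg y) = 1"
proof -
  have "(LINT y|lborel. gg y) = (LINT y|lborel. gg y * indicator {..-x0} y)"
    using gg_outside(2) by (intro Bochner_Integration.integral_cong) (auto simp: indicator_def)
  also have "\<dots> = J x0 (-x0)" using S_nonneg by (intro gg_cdf) (simp add: x0_def)
  also have "\<dots> = 1" using S_nonneg by (intro J_one) (auto simp: x0_def)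
  finally show ?thesis .
qed

end


context seqa begin

definition Mg :: "real measure" where
  "Mg = density lborel (\<lambda>x. ennreal (gg x))"

lemma measure_Mg: "measure Mg A = (LINT x|lborel. indicator A x *\<^sub>R gg x)" if [measurable]: "A \<in> sets borel"
proof -
  have int: "integrable lborel (\<lambda>x. indicator A x *\<^sub>R gg x)"
    by (rule integrable_mult_indicator) (auto intro: gg_integrable)
  have "emeasure Mg A = (\<integral>\<^sup>+x. ennreal (gg x) * indicator A x \<partial>lborel)"
    unfolding Mg_def by (subst emeasure_density) auto
  also have "\<dots> = (\<integral>\<^sup>+x. ennreal (indicator A x *\<^sub>R gg x) \<partial>lborel)"
    by (intro nn_integral_cong) (auto simp: indicator_def)
  also have "\<dots> = ennreal (LINT x|lborel. indicator A x *\<^sub>R gg x)"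
    using int gg_nonneg by (intro nn_integral_eq_integral) (auto simp: indicator_def)
  finally show ?thesis
    by (simp add: measure_def integral_nonneg_AE gg_nonneg indicator_def)
qed

lemma Mg_rd: "real_distribution Mg"
proof -
  have "emeasure Mg UNIV = (\<integral>\<^sup>+x. ennreal (gg x) \<partial>lborel)"
    unfolding Mg_def by (simp add: emeasure_density)
  also have "\<dots> = ennreal (LINT x|lborel. gg x)"
    using gg_integrable gg_nonneg by (intro nn_integral_eq_integral) auto
  also have "\<dots> = 1" using gg_int_one by simp
  finally have "emeasure Mg (space Mg) = 1" by (simp add: Mg_def)
  then have "prob_space Mg" by (rule prob_spaceI)
  then show ?thesis
    by (simp add: real_distribution_def real_distribution_axioms_def Mg_def)
qed

lemma cdf_Mg: "cdf Mg z = (if z < x0 then 0 else J x0 z)"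
proof (cases "z < x0")
  case True
  have "cdf Mg z = (LINT x|lborel. indicator {..z} x *\<^sub>R gg x)"
    unfolding cdf_def by (simp add: measure_Mg)
  also have "\<dots> = (LINT (x::real)|lborel. (0::real))"
    by (rule Bochner_Integration.integral_cong) (use True gg_outside(1) in \<open>auto simp: indicator_def\<close>)
  finally show ?thesis using True by simp
next
  case False
  have "cdf Mg z = (LINT x|lborel. gg x * indicator {..z} x)"
    unfolding cdf_def by (simp add: measure_Mg mult.commute)
  also have "\<dots> = J x0 z" using False by (intro gg_cdf) simp
  finally show ?thesis using False by simp
qed

lemma cdf_muc: "cdf (muc a (Suc n)) z = (if z < x0 then 0 else measure (muc a (Suc n)) {x0<..z})"
proof -
  interpret real_distribution "muc a (Suc n)" by (rule muc_rd)
  have x0S: "x0 < -S" by (simp add: x0_def)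
  show ?thesis
  proof (cases "z < x0")
    case True
    have "measure (muc a (Suc n)) {..z} = measure (muc a (Suc n)) {}"
      by (rule measure_eq_AE) (use muc_AE_S[of "Suc n"] True x0S in \<open>auto elim!: AE_mp\<close>)
    then show ?thesis using True by (simp add: cdf_def)
  next
    case False
    have "measure (muc a (Suc n)) {..z} = measure (muc a (Suc n)) {x0<..z}"
      by (rule measure_eq_AE) (use muc_AE_S[of "Suc n"] False x0S in \<open>auto elim!: AE_mp\<close>)
    then show ?thesis using False by (simp add: cdf_def)
  qed
qed

lemma weak_conv: "weak_conv_m (\<lambda>n. muc a (Suc n)) Mg"
  unfolding weak_conv_m_def weak_conv_def
proof (intro allI impI)
  fix z
  show "(\<lambda>n. cdf (muc a (Suc n)) z) \<longlonglongrightarrow> cdf Mg z"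
  proof (cases "z < x0")
    case True then show ?thesis unfolding cdf_muc cdf_Mg by simp
  next
    case False
    then show ?thesis unfolding cdf_muc cdf_Mg using J_lim[of x0 z] by simp
  qed
qed

lemma char_Mg: "char Mg k = complex_of_real (Phi a k)"
proof -
  have L1: "(\<lambda>n. char (muc a (Suc n)) k) \<longlonglongrightarrow> char Mg k"
    by (rule levy_continuity1[OF muc_rd Mg_rd weak_conv])
  have "(\<lambda>n. complex_of_real (Phin a (Suc n) k)) \<longlonglongrightarrow> complex_of_real (Phi a k)"
    by (intro tendsto_of_real LIMSEQ_Suc[OF Phin_tendsto])
  moreover have "char (muc a (Suc n)) k = complex_of_real (Phin a (Suc n) k)" for n
    by (rule char_mu) (rule apos)
  ultimately have L2: "(\<lambda>n. char (muc a (Suc n)) k) \<longlonglongrightarrow> complex_of_real (Phi a k)" by simp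
  show ?thesis using LIMSEQ_unique[OF L1 L2] .
qed

lemma fourier_gg: "fourier gg k = complex_of_real (Phi a k)"
proof -
  have "fourier gg k = (CLINT x|lborel. gg x *\<^sub>R iexp ((-k) * x))"
    unfolding fourier_def
    by (intro Bochner_Integration.integral_cong) (auto simp: cis_conv_exp scaleR_conv_of_real mult.commute)
  also have "\<dots> = char Mg (-k)"
    unfolding char_def Mg_def using gg_nonneg by (subst integral_density) auto
  also have "\<dots> = complex_of_real (Phi a k)" by (simp add: char_Mg Phi_even)
  finally show ?thesis .
qed

lemma gg_smooth: "smooth_fun gg"
proof -
  have e: "gg = (\<lambda>x. 1/(2*pi) * Cf (Phi a) 0 x)" by (simp add: gg_def fun_eq_iff)
  show ?thesis unfolding smooth_fun_def e
    by (intro allI Cf_smooth Phi_meas Phi_moment_int)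
qed

lemma exists_g:
  "\<exists>g. smooth_fun g \<and> (\<forall>x. g x \<ge> 0) \<and> (\<forall>x. g (-x) = g x) \<and> (\<forall>x. \<bar>x\<bar> > S \<longrightarrow> g x = 0)
     \<and> integrable lborel g \<and> (LINT x|lborel. g x) = 1 \<and> (\<forall>k. fourier g k = complex_of_real (Phi a k))"
  using gg_smooth gg_nonneg gg_even gg_zero gg_integrable gg_int_one fourier_gg by blast

end


lemma summable_shift_powr: "p > 1 \<Longrightarrow> summable (\<lambda>j::nat. real (Suc j) powr (-p))"
  using summable_real_powr_iff[of "-p"] summable_Suc_iff[of "\<lambda>n. real n powr (-p)"] by simp

theorem mainTheorem6:
  fixes l \<gamma> :: real and \<epsilon> :: "real \<Rightarrow> real"
  assumes l_pos: "l > 0"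
    and gamma: "0 < \<gamma>" "\<gamma> < 1"
    and eps_pos: "\<forall>k\<ge>0. \<epsilon> k > 0"
    and eps_mono: "antimono_on {0..} \<epsilon>"
    and eps_meas: "set_borel_measurable lborel {0..} \<epsilon>"
    and eps_int: "set_integrable lborel {1..} (\<lambda>k. \<epsilon> k / k)"
    and eps_liminf: "Liminf at_top (\<lambda>k. ereal (k powr \<gamma> * \<epsilon> k)) > 0"
  shows "\<exists>g :: real \<Rightarrow> real.
           smooth_fun g
         \<and> (\<forall>x. g x \<ge> 0)
         \<and> (\<forall>x. g (- x) = g x)
         \<and> (\<forall>x. \<bar>x\<bar> > l \<longrightarrow> g x = 0)
         \<and> integrable lborel g
         \<and> (LINT x|lborel. g x) = 1
         \<and> (\<forall>k. \<exists>r. fourier g k = complex_of_real r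
                     \<and> r \<ge> exp (- \<bar>k\<bar> * \<epsilon> \<bar>k\<bar>))"
proof -
  have emono: "\<epsilon> y \<le> \<epsilon> x" if "0 \<le> x" "x \<le> y" for x y
    using eps_mono that by (auto simp: monotone_on_def)
  obtain c0 where c0: "0 < ereal c0" "ereal c0 < Liminf at_top (\<lambda>k. ereal (k powr \<gamma> * \<epsilon> k))"
    using ereal_dense2[OF eps_liminf] by blast
  have "\<forall>\<^sub>F k in at_top. ereal c0 < ereal (k powr \<gamma> * \<epsilon> k)"
    by (rule less_LiminfD[OF c0(2)])
  then obtain N where N: "\<And>k. k \<ge> N \<Longrightarrow> c0 < k powr \<gamma> * \<epsilon> k"
    by (auto simp: eventually_at_top_linorder)
  define K where "K = max N 1"
  have K1: "K \<ge> 1" by (simp add: K_def)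
  have cK: "\<And>k. k \<ge> K \<Longrightarrow> c0 \<le> k powr \<gamma> * \<epsilon> k"
    using N unfolding K_def by (auto intro: less_imp_le)
  have c0pos: "c0 > 0" using c0(1) by simp
  define \<beta> where "\<beta> = 1 - \<gamma>"
  have b: "0 < \<beta>" "\<beta> < 1" using gamma by (auto simp: \<beta>_def)
  define s where "s = 2 / \<beta>"
  have s1: "s > 1" using b by (simp add: s_def field_simps)
  define e where "e = (\<lambda>j::nat. real (Suc j) powr (-s))"
  have epos: "e j > 0" for j by (simp add: e_def)
  have esum: "summable e" unfolding e_def by (rule summable_shift_powr[OF s1])
  have ebeta: "e j powr \<beta> = real (Suc j) powr (-2)" for j
    unfolding e_def using b by (simp add: powr_powr s_def)
  have ebsum: "summable (\<lambda>j. e j powr \<beta>)" unfolding ebeta by (rule summable_shift_powr) simp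
  define Z1 where "Z1 = suminf e"
  define Zb where "Zb = (\<Sum>j. e j powr \<beta>)"
  have Z1: "Z1 \<ge> 0" unfolding Z1_def by (rule suminf_nonneg[OF esum]) (auto intro: less_imp_le[OF epos])
  have Zb: "Zb \<ge> 0" unfolding Zb_def by (rule suminf_nonneg[OF ebsum]) auto
  define \<delta>0 where "\<delta>0 = \<epsilon> K"
  have d0: "\<delta>0 > 0" using eps_pos K1 by (simp add: \<delta>0_def)
  define Cb where "Cb = 2/\<beta> + 1"
  have Cb: "Cb > 0" using b by (simp add: Cb_def add_pos_pos)
  define X where "X = c0 / (Cb * (Zb + 1))"
  have Xpos: "X > 0" using c0pos Cb Zb by (simp add: X_def)
  define lam where "lam = min (l / (Z1 + 1)) (min (\<delta>0 / (3 * (Z1 + 1))) (X powr (1/\<beta>)))"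
  have lam: "lam > 0" using l_pos Z1 d0 Xpos by (simp add: lam_def)
  have lam1: "lam * (Z1 + 1) \<le> l"
  proof -
    have "lam \<le> l / (Z1 + 1)" by (simp add: lam_def)
    then show ?thesis using Z1 by (simp add: le_divide_eq)
  qed
  have lam2: "3 * lam * (Z1 + 1) \<le> \<delta>0"
  proof -
    have "lam \<le> \<delta>0 / (3 * (Z1 + 1))" by (simp add: lam_def)
    then have "lam * (3 * (Z1 + 1)) \<le> \<delta>0" using Z1 by (simp add: le_divide_eq)
    then show ?thesis by (simp add: algebra_simps)
  qed
  have lam3: "lam powr \<beta> \<le> X"
  proof -
    have "lam \<le> X powr (1/\<beta>)" by (simp add: lam_def)
    then have "lam powr \<beta> \<le> (X powr (1/\<beta>)) powr \<beta>" using lam b by (intro powr_mono2) auto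
    also have "\<dots> = X" using b Xpos by (simp add: powr_powr)
    finally show ?thesis .
  qed
  define a where "a = (\<lambda>j. lam * e j)"
  have apos: "a j > 0" for j using lam epos by (simp add: a_def)
  have asum: "summable a" unfolding a_def by (rule summable_mult[OF esum])
  have sa: "seqa a" by unfold_locales (auto intro: apos asum)
  interpret seqa a by (rule sa)
  have Seq: "seqa.S a = lam * Z1"
  proof -
    have "seqa.S a = suminf a" by (rule seqa.S_def[OF sa])
    also have "\<dots> = lam * Z1" unfolding a_def Z1_def by (rule suminf_mult[OF esum])
    finally show ?thesis .
  qed
  have Sl: "seqa.S a \<le> l" using lam1 lam Z1 unfolding Seq by (simp add: algebra_simps)
  have apb: "a j powr \<beta> = lam powr \<beta> * e j powr \<beta>" for j
    unfolding a_def using lam epos[of j] by (simp add: powr_mult)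
  have absum: "summable (\<lambda>j. a j powr \<beta>)" unfolding apb by (rule summable_mult[OF ebsum])
  have absumv: "(\<Sum>j. a j powr \<beta>) = lam powr \<beta> * Zb" unfolding apb Zb_def by (rule suminf_mult[OF ebsum])
  have a1: "a j powr 1 = a j" for j using apos[of j] by simp
  have low1: "Phi a k \<ge> exp (- (3 * (lam * Z1) * \<bar>k\<bar>))" for k
    using Phi_lower_exp[of 1 k] asum unfolding a1 by (simp add: Seq[symmetric] seqa.S_def[OF sa])
  have lowb: "Phi a k \<ge> exp (- (Cb * (lam powr \<beta> * Zb) * \<bar>k\<bar> powr \<beta>))" for k
    using Phi_lower_exp[of \<beta> k] b absum unfolding absumv Cb_def by simp
  obtain g where g: "smooth_fun g" "\<forall>x. g x \<ge> 0" "\<forall>x. g (-x) = g x" "\<forall>x. \<bar>x\<bar> > seqa.S a \<longrightarrow> g x = 0"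
    "integrable lborel g" "(LINT x|lborel. g x) = 1" "\<forall>k. fourier g k = complex_of_real (Phi a k)"
    using exists_g by blast
  have fin: "Phi a k \<ge> exp (- \<bar>k\<bar> * \<epsilon> \<bar>k\<bar>)" for k
  proof (cases "\<bar>k\<bar> \<le> K")
    case True
    have "\<epsilon> K \<le> \<epsilon> \<bar>k\<bar>" using True emono by simp
    then have "\<delta>0 * \<bar>k\<bar> \<le> \<epsilon> \<bar>k\<bar> * \<bar>k\<bar>" by (simp add: \<delta>0_def mult_right_mono)
    moreover have "3 * (lam * Z1) \<le> \<delta>0" using lam2 lam by (simp add: algebra_simps)
    then have "3 * (lam * Z1) * \<bar>k\<bar> \<le> \<delta>0 * \<bar>k\<bar>" by (simp add: mult_right_mono)
    ultimately have "exp (- \<bar>k\<bar> * \<epsilon> \<bar>k\<bar>) \<le> exp (- (3 * (lam * Z1) * \<bar>k\<bar>))"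
      by (simp add: mult.commute)
    then show ?thesis using low1[of k] by linarith
  next
    case False
    then have kK: "\<bar>k\<bar> \<ge> K" by simp
    then have kpos: "\<bar>k\<bar> > 0" using K1 by simp
    have "c0 \<le> \<bar>k\<bar> powr \<gamma> * \<epsilon> \<bar>k\<bar>" by (rule cK[OF kK])
    then have "\<bar>k\<bar> powr \<beta> * c0 \<le> \<bar>k\<bar> powr \<beta> * (\<bar>k\<bar> powr \<gamma> * \<epsilon> \<bar>k\<bar>)" by (simp add: mult_left_mono)
    also have "\<dots> = \<bar>k\<bar> * \<epsilon> \<bar>k\<bar>"
    proof -
      have "\<bar>k\<bar> powr \<beta> * \<bar>k\<bar> powr \<gamma> = \<bar>k\<bar> powr 1" using kpos by (simp add: powr_add[symmetric] \<beta>_def)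
      then show ?thesis using kpos by (simp add: mult.assoc[symmetric])
    qed
    finally have A: "\<bar>k\<bar> powr \<beta> * c0 \<le> \<bar>k\<bar> * \<epsilon> \<bar>k\<bar>" .
    have "Cb * (lam powr \<beta> * Zb) \<le> Cb * (X * (Zb + 1))"
      using lam3 Zb Cb Xpos by (intro mult_left_mono mult_mono) auto
    also have "\<dots> = c0" using Cb Zb by (simp add: X_def)
    finally have "Cb * (lam powr \<beta> * Zb) \<le> c0" .
    then have "Cb * (lam powr \<beta> * Zb) * \<bar>k\<bar> powr \<beta> \<le> c0 * \<bar>k\<bar> powr \<beta>" by (simp add: mult_right_mono)
    with A have "Cb * (lam powr \<beta> * Zb) * \<bar>k\<bar> powr \<beta> \<le> \<bar>k\<bar> * \<epsilon> \<bar>k\<bar>" by (simp add: mult.commute)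
    then have "exp (- \<bar>k\<bar> * \<epsilon> \<bar>k\<bar>) \<le> exp (- (Cb * (lam powr \<beta> * Zb) * \<bar>k\<bar> powr \<beta>))" by simp
    then show ?thesis using lowb[of k] by linarith
  qed
  show ?thesis
  proof (intro exI conjI)
    show "smooth_fun g" "\<forall>x. g x \<ge> 0" "\<forall>x. g (- x) = g x" "integrable lborel g" "(LINT x|lborel. g x) = 1"
      using g by auto
    show "\<forall>x. \<bar>x\<bar> > l \<longrightarrow> g x = 0" using g(4) Sl by auto
    show "\<forall>k. \<exists>r. fourier g k = complex_of_real r \<and> r \<ge> exp (- \<bar>k\<bar> * \<epsilon> \<bar>k\<bar>)"
      using g(7) fin by blast
  qed
qed


end
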